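(* Let $A \subseteq \mathbb{R}^d$ be a stationary Poisson point process. Then $A$ satisfies the mixed regularity property in expectation: for every $0 \le p \le d$, the total expected measure of the boundary $p$-tiles of the $d$-ball of radius $R$ centered at the origin is $o(R^d)$ as $R \to \infty$.
   Context: For a locally finite $A$, $\mathrm{Del}(A)$ is its Delaunay mosaic and, for a $p$-cell $\gamma \in \mathrm{Del}(A)$, $\gamma^*$ its dual $(d-p)$-dimensional Voronoi cell. $\mathrm{Gr}(p,d)$ is the Grassmannian of linear $p$-planes in $\mathbb{R}^d$, and $\mathbb{R}^d \times \mathrm{Gr}(p,d)$ carries the product of Lebesgue measure and the uniform probability measure on $\mathrm{Gr}(p,d)$. The $p$-tile of $\gamma$ is $J(\gamma,\gamma^* ) = \{(x,L) : x \in \text{the orthogonal projection of } \gamma \text{ onto } L+x, \text{ and } (L+x)\cap\gamma^* \neq \emptyset\}$. For a set $\Omega \subseteq \mathbb{R}^d$, a $p$-tile is a boundary tile of $\Omega$ if its projection to $\mathbb{R}^d$ contains at least one point in $\Omega$ and at least one point outside $\Omega$. *)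

theory Defs
  imports "HOL-Probability.Probability"
begin

definition locally_finite_set :: "'a::euclidean_space set \<Rightarrow> bool" where
  "locally_finite_set A \<longleftrightarrow> (\<forall>B. bounded B \<longrightarrow> finite (A \<inter> B))"

definition stationary_poisson_process ::
  "'w measure \<Rightarrow> ('w \<Rightarrow> 'a::euclidean_space set) \<Rightarrow> real \<Rightarrow> bool" where
  "stationary_poisson_process M X lam \<longleftrightarrow>
     prob_space M \<and> lam > 0 \<and>
     (\<forall>w\<in>space M. locally_finite_set (X w)) \<and>
     (\<forall>B. B \<in> sets borel \<and> bounded B \<longrightarrow>
        (\<lambda>w. card (X w \<inter> B)) \<in> measurable M (count_space UNIV) \<and>
        (\<forall>k::nat. measure M {w \<in> space M. card (X w \<inter> B) = k}
             = (lam * measure lborel B) ^ k / fact k * exp (- (lam * measure lborel B)))) \<and>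
     (\<forall>(I::nat set) B. finite I \<and> disjoint_family_on B I \<and>
        (\<forall>i\<in>I. B i \<in> sets borel \<and> bounded (B i)) \<longrightarrow>
        prob_space.indep_vars M (\<lambda>_. count_space UNIV) (\<lambda>i w. card (X w \<inter> B i)) I)"

definition nearest :: "'a::euclidean_space set \<Rightarrow> 'a \<Rightarrow> 'a set" where
  "nearest A x = {a \<in> A. \<forall>b\<in>A. dist x a \<le> dist x b}"

text \<open>Vertex sets Q of the cells of Del(A): Q is the set of nearest points of A for some x.
  The Delaunay cell is gamma = convex hull Q (Q is exactly its vertex set, since all points of Q
  lie on a common sphere), and its dual Voronoi cell is the set of points having all of Q
  among their nearest points.\<close>
definition delaunay_vertex_sets :: "'a::euclidean_space set \<Rightarrow> 'a set set" where
  "delaunay_vertex_sets A = {Q. Q \<noteq> {} \<and> (\<exists>x. nearest A x = Q)}"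

definition delaunay_cell :: "'a::euclidean_space set \<Rightarrow> 'a set" where
  "delaunay_cell Q = convex hull Q"

definition voronoi_dual :: "'a::euclidean_space set \<Rightarrow> 'a set \<Rightarrow> 'a set" where
  "voronoi_dual A Q = {x. Q \<subseteq> nearest A x}"

definition delaunay_pcells :: "'a::euclidean_space set \<Rightarrow> nat \<Rightarrow> 'a set set" where
  "delaunay_pcells A p = {Q \<in> delaunay_vertex_sets A. aff_dim (delaunay_cell Q) = int p}"

definition grassmannian :: "nat \<Rightarrow> 'a::euclidean_space set set" where
  "grassmannian p = {L. subspace L \<and> dim L = p}"

definition tile :: "nat \<Rightarrow> 'a::euclidean_space set \<Rightarrow> 'a set \<Rightarrow> ('a \<times> 'a set) set" where
  "tile p gam gamstar =
     {(x, L). L \<in> grassmannian p \<and>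
        x \<in> (\<lambda>y. closest_point ((\<lambda>v. x + v) ` L) y) ` gam \<and>
        ((\<lambda>v. x + v) ` L) \<inter> gamstar \<noteq> {}}"

definition ptile :: "'a::euclidean_space set \<Rightarrow> nat \<Rightarrow> 'a set \<Rightarrow> ('a \<times> 'a set) set" where
  "ptile A p Q = tile p (delaunay_cell Q) (voronoi_dual A Q)"

definition boundary_tile :: "'a set \<Rightarrow> ('a \<times> 'b) set \<Rightarrow> bool" where
  "boundary_tile \<Omega> J \<longleftrightarrow> (\<exists>x\<in>fst ` J. x \<in> \<Omega>) \<and> (\<exists>x\<in>fst ` J. x \<notin> \<Omega>)"

definition std_gauss :: "'a::euclidean_space measure" where
  "std_gauss = density lborel
     (\<lambda>x. ennreal ((2 * pi) powr (- real DIM('a) / 2) * exp (- (norm x)\<^sup>2 / 2)))"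

text \<open>Integral with respect to the uniform (rotation invariant) probability measure on Gr(p,d),
  realised as the law of the span of p independent standard Gaussian vectors.\<close>
definition grass_nn_integral :: "nat \<Rightarrow> ('a::euclidean_space set \<Rightarrow> ennreal) \<Rightarrow> ennreal" where
  "grass_nn_integral p f =
     (\<integral>\<^sup>+ v. f (span (v ` {..<p})) \<partial>(PiM {..<p} (\<lambda>_. std_gauss :: 'a measure)))"

text \<open>Measure of a set J of pairs (x,L) under Lebesgue x uniform Grassmannian measure
  (computed by Tonelli: integrate over L the Lebesgue measure of the slice).\<close>
definition tile_measure :: "nat \<Rightarrow> ('a::euclidean_space \<times> 'a set) set \<Rightarrow> ennreal" where
  "tile_measure p J = grass_nn_integral p (\<lambda>L. emeasure lebesgue {x. (x, L) \<in> J})"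

definition boundary_ptile_measure :: "'a::euclidean_space set \<Rightarrow> nat \<Rightarrow> 'a set \<Rightarrow> ennreal" where
  "boundary_ptile_measure A p \<Omega> =
     (\<Sum>\<^sub>\<infinity> Q \<in> {Q \<in> delaunay_pcells A p. boundary_tile \<Omega> (ptile A p Q)}.
        tile_measure p (ptile A p Q))"

end

theory Submission
  imports Defs
begin

definition vec_of :: "('a::euclidean_space \<Rightarrow> int) \<Rightarrow> 'a" where
  "vec_of f = (\<Sum>b\<in>Basis. of_int (f b) *\<^sub>R b)"

definition lattice :: "'a::euclidean_space set" where
  "lattice = vec_of ` (Basis \<rightarrow>\<^sub>E (UNIV::int set))"

definition latf :: "'a::euclidean_space \<Rightarrow> 'a" where
  "latf x = vec_of (\<lambda>b. \<lfloor>x \<bullet> b\<rfloor>)"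

lemma vec_of_inner: "b \<in> Basis \<Longrightarrow> vec_of f \<bullet> b = of_int (f b)"
  unfolding vec_of_def by simp

lemma countable_lattice: "countable (lattice :: 'a::euclidean_space set)"
  unfolding lattice_def by (intro countable_image countable_PiE) auto

lemma vec_of_restrict: "vec_of (restrict f (Basis::'a::euclidean_space set)) = (vec_of f :: 'a)"
  unfolding vec_of_def by (intro sum.cong) auto

lemma latf_in: "latf x \<in> lattice"
proof -
  have "latf x = vec_of (restrict (\<lambda>b. \<lfloor>x \<bullet> b\<rfloor>) Basis)"
    unfolding latf_def vec_of_restrict ..
  then show ?thesis unfolding lattice_def by auto
qed

lemma latf_inner: "b \<in> Basis \<Longrightarrow> latf x \<bullet> b = of_int \<lfloor>x \<bullet> b\<rfloor>"
  unfolding latf_def by (simp add: vec_of_inner)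

lemma lattice_int: "k \<in> lattice \<Longrightarrow> b \<in> Basis \<Longrightarrow> \<exists>i::int. k \<bullet> b = of_int i"
  unfolding lattice_def by (auto simp: vec_of_inner)

lemma lattice_eq:
  assumes "k \<in> lattice" "k' \<in> lattice" "\<And>b. b \<in> Basis \<Longrightarrow> \<bar>k \<bullet> b - k' \<bullet> b\<bar> < 1"
  shows "k = k'"
proof (rule euclidean_eqI)
  fix b :: 'a assume b: "b \<in> Basis"
  obtain i where i: "k \<bullet> b = of_int i" using lattice_int[OF assms(1) b] by auto
  obtain i' where i': "k' \<bullet> b = of_int i'" using lattice_int[OF assms(2) b] by auto
  have "\<bar>of_int i - of_int i'\<bar> < (1::real)" using assms(3)[OF b] i i' by simp
  then have "\<bar>i - i'\<bar> < 1" by linarith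
  then have "i = i'" by linarith
  then show "k \<bullet> b = k' \<bullet> b" using i i' by simp
qed

lemma norm_le_DIM:
  fixes x :: "'a::euclidean_space"
  assumes "\<And>b. b \<in> Basis \<Longrightarrow> \<bar>x \<bullet> b\<bar> \<le> c"
  shows "norm x \<le> real DIM('a) * c"
proof -
  have "norm x \<le> (\<Sum>b\<in>Basis. \<bar>x \<bullet> b\<bar>)" by (rule norm_le_l1)
  also have "\<dots> \<le> (\<Sum>b\<in>(Basis::'a set). c)" by (intro sum_mono assms)
  also have "\<dots> = real DIM('a) * c" by simp
  finally show ?thesis .
qed

lemma norm_latf: fixes x :: "'a::euclidean_space" shows "norm (x - latf x) \<le> real DIM('a)"
proof -
  have "norm (x - latf x) \<le> real DIM('a) * 1"
  proof (rule norm_le_DIM)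
    fix b :: 'a assume "b \<in> Basis"
    then show "\<bar>(x - latf x) \<bullet> b\<bar> \<le> 1"
      by (simp add: inner_diff_left latf_inner) linarith
  qed
  then show ?thesis by simp
qed

lemma DIM_ge1: "real DIM('a::euclidean_space) \<ge> 1"
  using DIM_positive[where 'a='a] by linarith

lemma inner_le_norm_Basis: "b \<in> Basis \<Longrightarrow> \<bar>x \<bullet> b\<bar> \<le> norm x"
  by (metis Basis_le_norm)



lemma box_lattice_disjoint:
  fixes j j' :: "'a::euclidean_space"
  assumes s: "s > 0" and j: "j \<in> lattice" "j' \<in> lattice" and ne: "j \<noteq> j'"
  shows "box (s *\<^sub>R j) (s *\<^sub>R j + s *\<^sub>R One) \<inter> box (s *\<^sub>R j') (s *\<^sub>R j' + s *\<^sub>R One) = {}"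
proof (rule ccontr)
  assume "\<not> ?thesis"
  then obtain x where x1: "x \<in> box (s *\<^sub>R j) (s *\<^sub>R j + s *\<^sub>R One)"
    and x2: "x \<in> box (s *\<^sub>R j') (s *\<^sub>R j' + s *\<^sub>R One)" by blast
  have "j = j'"
  proof (rule lattice_eq[OF j])
    fix b :: 'a assume b: "b \<in> Basis"
    from x1 b have a1: "s * (j \<bullet> b) < x \<bullet> b" "x \<bullet> b < s * (j \<bullet> b) + s"
      by (auto simp: mem_box inner_add_left)
    from x2 b have a2: "s * (j' \<bullet> b) < x \<bullet> b" "x \<bullet> b < s * (j' \<bullet> b) + s"
      by (auto simp: mem_box inner_add_left)
    have "s * (j \<bullet> b) < s * (j' \<bullet> b + 1)" "s * (j' \<bullet> b) < s * (j \<bullet> b + 1)"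
      using a1 a2 by (auto simp: algebra_simps)
    then have "j \<bullet> b < j' \<bullet> b + 1" "j' \<bullet> b < j \<bullet> b + 1"
      using s by (auto simp: mult_less_cancel_left_pos)
    then show "\<bar>j \<bullet> b - j' \<bullet> b\<bar> < 1" by linarith
  qed
  with ne show False by simp
qed

lemma emeasure_box_s:
  fixes j :: "'a::euclidean_space"
  assumes "s > 0"
  shows "emeasure lborel (box (s *\<^sub>R j) (s *\<^sub>R j + s *\<^sub>R One)) = ennreal (s ^ DIM('a))"
proof -
  show ?thesis
    using assms by (simp add: emeasure_lborel_box_eq inner_add_left)
qed

lemma lattice_count:
  fixes S :: "'a::euclidean_space set"
  assumes s: "s > 0" and T: "T \<in> sets lborel" and TV: "emeasure lborel T \<le> ennreal V" and V: "V \<ge> 0"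
    and SL: "S \<subseteq> lattice" and box: "\<And>j. j \<in> S \<Longrightarrow> box (s *\<^sub>R j) (s *\<^sub>R j + s *\<^sub>R One) \<subseteq> T"
  shows "finite S \<and> real (card S) * s ^ DIM('a) \<le> V"
proof -
  have sd: "s ^ DIM('a) > 0" using s by simp
  have key: "real (card F) * s ^ DIM('a) \<le> V" if F: "F \<subseteq> S" "finite F" for F
  proof -
    have "ennreal (real (card F) * s ^ DIM('a)) = (\<Sum>j\<in>F. ennreal (s ^ DIM('a)))"
      using s by (simp add: ennreal_of_nat_eq_real_of_nat ennreal_mult)
    also have "\<dots> = (\<Sum>j\<in>F. emeasure lborel (box (s *\<^sub>R (j::'a)) (s *\<^sub>R j + s *\<^sub>R One)))"
      using s by (simp add: emeasure_box_s)
    also have "\<dots> = emeasure lborel (\<Union>j\<in>F. box (s *\<^sub>R j) (s *\<^sub>R j + s *\<^sub>R One))"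
    proof (rule sum_emeasure)
      show "disjoint_family_on (\<lambda>j. box (s *\<^sub>R j) (s *\<^sub>R j + s *\<^sub>R One)) F"
        unfolding disjoint_family_on_def using box_lattice_disjoint[OF s] F SL by blast
    qed (use F in auto)
    also have "\<dots> \<le> emeasure lborel T"
      using F box T by (intro emeasure_mono) auto
    also have "\<dots> \<le> ennreal V" by (rule TV)
    finally show ?thesis using V by (simp add: ennreal_le_iff)
  qed
  have "finite S \<and> card S \<le> nat \<lfloor>V / s ^ DIM('a)\<rfloor>"
  proof (rule finite_if_finite_subsets_card_bdd)
    fix G assume "G \<subseteq> S" "finite G"
    from key[OF this] have "real (card G) \<le> V / s ^ DIM('a)"
      using sd by (simp add: field_simps)
    then show "card G \<le> nat \<lfloor>V / s ^ DIM('a)\<rfloor>" by linarith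
  qed
  then show ?thesis using key[of S] by auto
qed


definition Cc :: "real \<Rightarrow> 'a \<Rightarrow> 'a::euclidean_space set" where
  "Cc m j = cbox (m *\<^sub>R j) (m *\<^sub>R j + m *\<^sub>R One)"

definition Bx :: "'a::euclidean_space \<Rightarrow> real \<Rightarrow> 'a set" where
  "Bx k c = cbox (k - c *\<^sub>R One) (k + c *\<^sub>R One)"

definition JJ :: "'a::euclidean_space \<Rightarrow> real \<Rightarrow> 'a set" where
  "JJ k m = {j \<in> lattice. norm (m *\<^sub>R j - k) \<le> 4 * real DIM('a) * m}"

definition GA :: "'a::euclidean_space set \<Rightarrow> 'a \<Rightarrow> real \<Rightarrow> bool" where
  "GA A k m \<longleftrightarrow> (\<forall>j\<in>JJ k m. A \<inter> Cc m j \<noteq> {})"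

lemma Cc_diam:
  fixes x y :: "'a::euclidean_space"
  assumes "x \<in> Cc m j" "y \<in> Cc m j"
  shows "norm (x - y) \<le> real DIM('a) * m"
proof (rule norm_le_DIM)
  fix b :: 'a assume "b \<in> Basis"
  with assms have "m * (j \<bullet> b) \<le> x \<bullet> b \<and> x \<bullet> b \<le> m * (j \<bullet> b) + m"
      "m * (j \<bullet> b) \<le> y \<bullet> b \<and> y \<bullet> b \<le> m * (j \<bullet> b) + m"
    by (auto simp: Cc_def mem_box inner_diff_left inner_add_left)
  then show "\<bar>(x - y) \<bullet> b\<bar> \<le> m" by (simp add: inner_diff_left abs_le_iff)
qed

lemma in_Cc:
  fixes x :: "'a::euclidean_space"
  assumes m: "m > 0"
  shows "x \<in> Cc m (latf (inverse m *\<^sub>R x))"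
  unfolding Cc_def mem_box
proof safe
  fix b :: 'a assume b: "b \<in> Basis"
  let ?f = "\<lfloor>x \<bullet> b / m\<rfloor>"
  have 1: "real_of_int ?f \<le> x \<bullet> b / m" "x \<bullet> b / m < real_of_int ?f + 1" by linarith+
  have "m * real_of_int ?f \<le> x \<bullet> b" using 1(1) m by (metis mult.commute pos_le_divide_eq)
  moreover have "x \<bullet> b < m * real_of_int ?f + m" using 1(2) m by (simp add: pos_divide_less_eq algebra_simps)
  ultimately show "(m *\<^sub>R latf (inverse m *\<^sub>R x)) \<bullet> b \<le> x \<bullet> b"
     "x \<bullet> b \<le> (m *\<^sub>R latf (inverse m *\<^sub>R x) + m *\<^sub>R One) \<bullet> b"
    using b by (auto simp: latf_inner inner_add_left field_simps)
qed

lemma corner_in_Cc: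
  assumes "m \<ge> 0"
  shows "m *\<^sub>R j \<in> Cc m (j::'a::euclidean_space)"
  using assms unfolding Cc_def mem_box by (auto simp: inner_add_left)

lemma scale_bound:
  fixes A :: "'a::euclidean_space set"
  assumes m: "m \<ge> 1" and G: "GA A k m" and empty: "ball z r \<inter> A = {}"
    and az: "dist a z \<le> r" and ak: "norm (a - k) \<le> real DIM('a)"
  shows "r < 2 * real DIM('a) * m"
proof (rule ccontr)
  define D where "D = real DIM('a)"
  have D1: "D \<ge> 1" unfolding D_def by (rule DIM_ge1)
  define \<rho> where "\<rho> = 2 * D * m"
  assume "\<not> r < 2 * real DIM('a) * m"
  then have r\<rho>: "\<rho> \<le> r" unfolding \<rho>_def D_def by simp
  have \<rho>pos: "\<rho> > 0" unfolding \<rho>_def using D1 m by simp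
  then have rpos: "r > 0" using r\<rho> by simp
  define z' where "z' = a + (\<rho> / r) *\<^sub>R (z - a)"
  have za: "norm (z - a) \<le> r" using az by (simp add: dist_norm norm_minus_commute)
  have z'a: "norm (z' - a) \<le> \<rho>"
  proof -
    have "norm (z' - a) = (\<rho> / r) * norm (z - a)" unfolding z'_def using \<rho>pos rpos by simp
    also have "\<dots> \<le> (\<rho> / r) * r" using za \<rho>pos rpos by (intro mult_left_mono) auto
    also have "\<dots> = \<rho>" using rpos by simp
    finally show ?thesis .
  qed
  have zz': "norm (z - z') \<le> r - \<rho>"
  proof -
    have "z - z' = (1 - \<rho> / r) *\<^sub>R (z - a)" unfolding z'_def by (simp add: algebra_simps)
    then have "norm (z - z') = (1 - \<rho> / r) * norm (z - a)" using r\<rho> rpos by simp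
    also have "\<dots> \<le> (1 - \<rho> / r) * r" using za r\<rho> rpos by (intro mult_left_mono) auto
    also have "\<dots> = r - \<rho>" using rpos by (simp add: algebra_simps)
    finally show ?thesis .
  qed
  define j where "j = latf (inverse m *\<^sub>R z')"
  have z'C: "z' \<in> Cc m j" unfolding j_def using m by (intro in_Cc) auto
  have Cempty: "A \<inter> Cc m j = {}"
  proof (rule ccontr)
    assume "A \<inter> Cc m j \<noteq> {}"
    then obtain y where y: "y \<in> A" "y \<in> Cc m j" by auto
    have "norm (y - z') \<le> D * m" using Cc_diam[OF y(2) z'C] unfolding D_def .
    also have "\<dots> < \<rho>" unfolding \<rho>_def using D1 m by simp
    finally have yz': "norm (y - z') < \<rho>" .
    have "norm (y - z) \<le> norm (y - z') + norm (z - z')"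
      using norm_triangle_ineq[of "y - z'" "z' - z"] by (simp add: norm_minus_commute)
    then have "dist z y < r" using zz' yz' by (simp add: dist_norm norm_minus_commute)
    then have "y \<in> ball z r" by simp
    with y(1) empty show False by blast
  qed
  have "j \<in> JJ k m"
  proof -
    have "norm (m *\<^sub>R j - z') \<le> D * m" using Cc_diam[OF corner_in_Cc z'C] m unfolding D_def by simp
    moreover have "norm (a - k) \<le> D" using ak unfolding D_def .
    moreover have "norm (m *\<^sub>R j - k) \<le> norm (m *\<^sub>R j - z') + norm (z' - a) + norm (a - k)"
      using norm_triangle_ineq[of "m *\<^sub>R j - z'" "z' - a"] norm_triangle_ineq[of "m *\<^sub>R j - a" "a - k"]
      by (simp add: algebra_simps)
    ultimately have "norm (m *\<^sub>R j - k) \<le> D * m + \<rho> + D" using z'a by linarith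
    also have "\<dots> \<le> 4 * D * m" unfolding \<rho>_def using D1 m mult_left_mono[OF m, of D] by simp
    finally show ?thesis unfolding JJ_def D_def j_def using latf_in by auto
  qed
  with G Cempty show False unfolding GA_def by blast
qed


lemma nearest_empty_ball:
  assumes "q \<in> nearest A z"
  shows "ball z (dist z q) \<inter> A = {}"
  using assms unfolding nearest_def by (auto simp: dist_commute not_less)

lemma nearest_same_dist:
  assumes "q \<in> nearest A z" "q' \<in> nearest A z"
  shows "dist z q' = dist z q"
  using assms unfolding nearest_def by (auto intro: antisym)

lemma tile_slice:
  fixes A Q :: "'a::euclidean_space set"
  assumes xL: "(x, L) \<in> tile p (convex hull Q) (voronoi_dual A Q)" and q: "q \<in> Q"
  shows "\<exists>z. Q \<subseteq> nearest A z \<and> dist x z \<le> dist z q"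
proof -
  define S where "S = (\<lambda>v. x + v) ` L"
  from xL have L: "L \<in> grassmannian p" and xy: "x \<in> (\<lambda>y. closest_point S y) ` (convex hull Q)"
    and Sz: "S \<inter> voronoi_dual A Q \<noteq> {}"
    unfolding tile_def S_def by auto
  have sub: "subspace L" using L unfolding grassmannian_def by auto
  have S_eq: "S = (+) x ` L" unfolding S_def by auto
  have convS: "convex S" unfolding S_eq using sub by (intro convex_translation subspace_imp_convex)
  have closS: "closed S" unfolding S_eq using sub by (intro closed_translation closed_subspace)
  obtain y where y: "y \<in> convex hull Q" and xcl: "x = closest_point S y" using xy by auto
  obtain z where zS: "z \<in> S" and zV: "Q \<subseteq> nearest A z" using Sz unfolding voronoi_dual_def by auto
  have dot: "inner (y - x) (z - x) \<le> 0"
    using closest_point_dot[OF convS closS zS, of y] xcl by simp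
  have "(norm (z - x))\<^sup>2 \<le> (norm (y - z))\<^sup>2"
  proof -
    have "(norm (y - z))\<^sup>2 = (norm (y - x))\<^sup>2 - 2 * inner (y - x) (z - x) + (norm (z - x))\<^sup>2"
      by (simp add: power2_norm_eq_inner inner_diff_left inner_diff_right inner_commute algebra_simps)
    then show ?thesis using dot by (smt (verit) zero_le_power2)
  qed
  then have "norm (z - x) \<le> norm (y - z)" by (rule power2_le_imp_le) simp
  then have d1: "dist x z \<le> dist z y" by (simp add: dist_norm norm_minus_commute)
  have "Q \<subseteq> cball z (dist z q)"
  proof
    fix q' assume "q' \<in> Q"
    then have "dist z q' = dist z q" using zV q by (intro nearest_same_dist) auto
    then show "q' \<in> cball z (dist z q)" by simp
  qed
  then have "convex hull Q \<subseteq> cball z (dist z q)" by (intro hull_minimal) auto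
  with y have "dist z y \<le> dist z q" by auto
  with d1 zV show ?thesis by auto
qed

lemma geo_C1:
  fixes A :: "'a::euclidean_space set"
  assumes q0: "q0 \<in> Q" and k: "norm (q0 - k) \<le> real DIM('a)"
    and m: "m \<ge> 1" and G: "GA A k m" and xL: "(x, L) \<in> ptile A p Q"
  shows "dist x q0 < 4 * real DIM('a) * m"
proof -
  from xL have "(x, L) \<in> tile p (convex hull Q) (voronoi_dual A Q)"
    unfolding ptile_def delaunay_cell_def .
  from tile_slice[OF this q0] obtain z where zN: "Q \<subseteq> nearest A z" and xz: "dist x z \<le> dist z q0" by auto
  have "ball z (dist z q0) \<inter> A = {}" using zN q0 by (intro nearest_empty_ball) auto
  from scale_bound[OF m G this _ k] have "dist z q0 < 2 * real DIM('a) * m" by (simp add: dist_commute)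
  moreover have "dist x q0 \<le> dist x z + dist z q0" by (rule dist_triangle)
  ultimately show ?thesis using xz by linarith
qed

lemma geo_Q:
  fixes A :: "'a::euclidean_space set"
  assumes Q: "Q \<in> delaunay_vertex_sets A" and q0: "q0 \<in> Q" and k: "norm (q0 - k) \<le> real DIM('a)"
    and m: "m \<ge> 1" and G: "GA A k m"
  shows "Q \<subseteq> Bx k (5 * real DIM('a) * m)"
proof
  fix q assume q: "q \<in> Q"
  from Q obtain x0 where x0: "nearest A x0 = Q" unfolding delaunay_vertex_sets_def by auto
  have "ball x0 (dist x0 q0) \<inter> A = {}" using x0 q0 by (intro nearest_empty_ball) auto
  from scale_bound[OF m G this _ k] have r: "dist x0 q0 < 2 * real DIM('a) * m" by (simp add: dist_commute)
  have "dist x0 q = dist x0 q0" using x0 q q0 by (intro nearest_same_dist) auto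
  moreover have "dist q q0 \<le> dist q x0 + dist x0 q0" by (rule dist_triangle)
  ultimately have "dist q q0 < 4 * real DIM('a) * m" using r by (simp add: dist_commute)
  moreover have "norm (q - k) \<le> dist q q0 + norm (q0 - k)"
    using norm_triangle_ineq[of "q - q0" "q0 - k"] by (simp add: dist_norm)
  moreover have "real DIM('a) \<le> real DIM('a) * m" using m DIM_ge1[where 'a='a] by simp
  ultimately have nk: "norm (q - k) \<le> 5 * real DIM('a) * m" using k by linarith
  show "q \<in> Bx k (5 * real DIM('a) * m)"
    unfolding Bx_def mem_box
  proof safe
    fix b :: 'a assume b: "b \<in> Basis"
    have "\<bar>(q - k) \<bullet> b\<bar> \<le> 5 * real DIM('a) * m" using inner_le_norm_Basis[OF b, of "q - k"] nk by linarith
    then show "(k - (5 * real DIM('a) * m) *\<^sub>R One) \<bullet> b \<le> q \<bullet> b"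
      "q \<bullet> b \<le> (k + (5 * real DIM('a) * m) *\<^sub>R One) \<bullet> b"
      using b by (auto simp: inner_diff_left inner_add_left abs_le_iff)
  qed
qed

lemma geo_boundary:
  fixes J :: "('a::euclidean_space \<times> 'b) set"
  assumes bt: "boundary_tile (ball 0 R) J" and c: "\<And>x L. (x, L) \<in> J \<Longrightarrow> dist x q0 < c"
    and k: "norm (q0 - k) \<le> e"
  shows "R - c - e < norm k \<and> norm k < R + c + e"
proof -
  from bt obtain x1 L1 x2 L2 where 1: "(x1, L1) \<in> J" "norm x1 < R" and 2: "(x2, L2) \<in> J" "norm x2 \<ge> R"
    unfolding boundary_tile_def by force
  have "dist x1 q0 < c" "dist x2 q0 < c" using c 1 2 by auto
  moreover have "norm q0 \<le> norm x1 + dist x1 q0" "norm x2 \<le> norm q0 + dist x2 q0"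
    using norm_triangle_ineq[of x1 "q0 - x1"] norm_triangle_ineq[of q0 "x2 - q0"]
    by (auto simp: dist_norm norm_minus_commute)
  moreover have "norm k \<le> norm q0 + norm (q0 - k)" "norm q0 \<le> norm k + norm (q0 - k)"
    using norm_triangle_ineq[of q0 "k - q0"] norm_triangle_ineq[of k "q0 - k"]
    by (auto simp: norm_minus_commute)
  ultimately show ?thesis using 1 2 k by linarith
qed

lemma emeasure_lebesgue_Bx:
  fixes k :: "'a::euclidean_space"
  assumes "c \<ge> 0"
  shows "emeasure lebesgue (Bx k c) = ennreal ((2 * c) ^ DIM('a))"
  using assms by (simp add: Bx_def emeasure_lborel_cbox_eq inner_add_left inner_diff_left)


lemma gauss_factor:
  fixes x :: "'a::euclidean_space"
  shows "(2 * pi) powr (- real DIM('a) / 2) * exp (- (norm x)\<^sup>2 / 2)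
       = (\<Prod>b\<in>Basis. std_normal_density (x \<bullet> b))"
proof -
  have n2: "(norm x)\<^sup>2 = (\<Sum>b\<in>Basis. (x \<bullet> b)\<^sup>2)"
    unfolding power2_norm_eq_inner by (subst euclidean_inner) (simp add: power2_eq_square)
  have c: "(2 * pi) powr (- real DIM('a) / 2) = (1 / sqrt (2 * pi)) ^ DIM('a)"
  proof -
    have "(1 / sqrt (2 * pi)) ^ DIM('a) = ((2 * pi) powr (- 1 / 2)) ^ DIM('a)"
      by (simp add: powr_minus_divide powr_half_sqrt)
    also have "\<dots> = ((2 * pi) powr (- 1 / 2)) powr (real DIM('a))"
      by (simp add: powr_realpow)
    also have "\<dots> = (2 * pi) powr (- real DIM('a) / 2)"
      by (simp add: powr_powr)
    finally show ?thesis by simp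
  qed
  have "(\<Prod>b\<in>(Basis::'a set). std_normal_density (x \<bullet> b))
      = (\<Prod>b\<in>(Basis::'a set). (1 / sqrt (2 * pi)) * exp (- (x \<bullet> b)\<^sup>2 / 2))"
    by (simp add: std_normal_density_def)
  also have "\<dots> = (1 / sqrt (2 * pi)) ^ DIM('a) * exp (\<Sum>b\<in>(Basis::'a set). - (x \<bullet> b)\<^sup>2 / 2)"
    by (simp only: prod.distrib prod_constant) (simp add: exp_sum)
  also have "(\<Sum>b\<in>(Basis::'a set). - (x \<bullet> b)\<^sup>2 / 2) = - (norm x)\<^sup>2 / 2"
    by (simp add: n2 sum_divide_distrib sum_negf)
  finally show ?thesis using c by simp
qed

lemma prob_std_gauss: "prob_space (std_gauss :: 'a::euclidean_space measure)"
proof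
  let ?g = "\<lambda>x::'a. ennreal ((2 * pi) powr (- real DIM('a) / 2) * exp (- (norm x)\<^sup>2 / 2))"
  have gm: "?g \<in> borel_measurable lborel" by measurable
  have "emeasure (std_gauss :: 'a measure) (space std_gauss) = (\<integral>\<^sup>+ x. ?g x * indicator UNIV x \<partial>lborel)"
    unfolding std_gauss_def by (subst emeasure_density[OF gm]) auto
  also have "\<dots> = (\<integral>\<^sup>+ x. (\<Prod>b\<in>(Basis::'a set). ennreal (std_normal_density (x \<bullet> b))) \<partial>lborel)"
    by (intro nn_integral_cong, unfold gauss_factor) (simp add: prod_ennreal)
  also have "\<dots> = (\<Prod>b\<in>(Basis::'a set). (\<integral>\<^sup>+ t. ennreal (std_normal_density t) \<partial>lborel))"
    by (rule nn_integral_lborel_prod) auto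
  also have "\<dots> = 1"
    by (simp add: nn_integral_eq_integral)
  finally show "emeasure (std_gauss :: 'a measure) (space std_gauss) = 1" .
qed

lemma grass_bound:
  assumes "\<And>L. f L \<le> c"
  shows "grass_nn_integral p f \<le> c"
proof -
  interpret P: prob_space "PiM {..<p} (\<lambda>_. std_gauss :: 'a::euclidean_space measure)"
    by (intro prob_space_PiM prob_std_gauss)
  have "grass_nn_integral p f \<le> (\<integral>\<^sup>+ v. c \<partial>(PiM {..<p} (\<lambda>_. std_gauss :: 'a measure)))"
    unfolding grass_nn_integral_def by (intro nn_integral_mono assms)
  also have "\<dots> = c" by (simp add: P.emeasure_space_1)
  finally show ?thesis .
qed

lemma tile_measure_bound:
  fixes J :: "('a::euclidean_space \<times> 'a set) set"
  assumes c: "\<And>x L. (x, L) \<in> J \<Longrightarrow> dist x q0 < c" and c0: "c \<ge> 0"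
  shows "tile_measure p J \<le> ennreal ((2 * c) ^ DIM('a))"
  unfolding tile_measure_def
proof (rule grass_bound)
  fix L
  have "{x. (x, L) \<in> J} \<subseteq> Bx q0 c"
  proof
    fix x assume "x \<in> {x. (x, L) \<in> J}"
    then have "norm (x - q0) < c" using c by (auto simp: dist_norm)
    then show "x \<in> Bx q0 c" unfolding Bx_def mem_box
      using inner_le_norm_Basis[of _ "x - q0"]
      by (auto simp: inner_diff_left inner_add_left abs_le_iff) (smt (verit))+
  qed
  then have "emeasure lebesgue {x. (x, L) \<in> J} \<le> emeasure lebesgue (Bx q0 c)"
    by (intro emeasure_mono) (auto simp: Bx_def)
  also have "\<dots> = ennreal ((2 * c) ^ DIM('a))" using c0 by (rule emeasure_lebesgue_Bx)
  finally show "emeasure lebesgue {x. (x, L) \<in> J} \<le> ennreal ((2 * c) ^ DIM('a))" .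
qed


lemma cell_basis:
  fixes A :: "'a::euclidean_space set"
  assumes Q: "Q \<in> delaunay_pcells A p"
  shows "\<exists>S. S \<subseteq> Q \<and> card S = Suc p \<and> affine hull S = affine hull Q"
proof -
  obtain S where S: "S \<subseteq> Q" "\<not> affine_dependent S" "affine hull Q = affine hull S"
    using affine_basis_exists[of Q] by blast
  have "aff_dim S = aff_dim Q"
    by (metis S(3) aff_dim_affine_hull)
  also have "\<dots> = int p" using Q unfolding delaunay_pcells_def delaunay_cell_def
    by (simp add: aff_dim_convex_hull)
  finally have "of_nat (card S) = int p + 1" using aff_dim_affine_independent[OF S(2)] by simp
  then have "card S = Suc p" by simp
  with S show ?thesis by auto
qed

lemma norm_diff_sq_identity:
  fixes x x' y :: "'a::real_inner"
  shows "(norm (y - x))\<^sup>2 - (norm (y - x'))\<^sup>2 = 2 * inner (x' - x) y + (norm x)\<^sup>2 - (norm x')\<^sup>2"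
  by (simp add: power2_norm_eq_inner inner_diff_left inner_diff_right inner_commute algebra_simps)

lemma cell_inj:
  fixes A :: "'a::euclidean_space set"
  assumes Q: "Q \<in> delaunay_vertex_sets A" and Q': "Q' \<in> delaunay_vertex_sets A"
    and S: "S \<subseteq> Q" "S \<subseteq> Q'" and hull: "affine hull S = affine hull Q"
  shows "Q \<subseteq> Q'"
proof
  fix q assume q: "q \<in> Q"
  obtain x where x: "nearest A x = Q" using Q unfolding delaunay_vertex_sets_def by auto
  obtain x' where x': "nearest A x' = Q'" using Q' unfolding delaunay_vertex_sets_def by auto
  have "S \<noteq> {}"
  proof
    assume "S = {}"
    then have "affine hull Q = {}" using hull by simp
    then have "Q = {}" by simp
    with q show False by simp
  qed
  then obtain s0 where s0: "s0 \<in> S" by auto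
  define r where "r = dist x s0"
  define r' where "r' = dist x' s0"
  define \<beta> where "\<beta> = ((r\<^sup>2 - r'\<^sup>2) - (norm x)\<^sup>2 + (norm x')\<^sup>2) / 2"
  have Hs: "inner (x' - x) y = \<beta>" if y: "dist x y = r" "dist x' y = r'" for y
  proof -
    have "(norm (y - x))\<^sup>2 - (norm (y - x'))\<^sup>2 = r\<^sup>2 - r'\<^sup>2"
      using y by (simp add: dist_norm norm_minus_commute)
    then show ?thesis using norm_diff_sq_identity[of y x x'] unfolding \<beta>_def by simp
  qed
  have "S \<subseteq> {y. inner (x' - x) y = \<beta>}"
  proof
    fix s assume s: "s \<in> S"
    have "dist x s = r" unfolding r_def using s s0 S x by (intro nearest_same_dist) auto
    moreover have "dist x' s = r'" unfolding r'_def using s s0 S x' by (intro nearest_same_dist) auto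
    ultimately show "s \<in> {y. inner (x' - x) y = \<beta>}" using Hs by auto
  qed
  then have "affine hull S \<subseteq> {y. inner (x' - x) y = \<beta>}"
    by (intro hull_minimal affine_hyperplane)
  then have "Q \<subseteq> {y. inner (x' - x) y = \<beta>}" using hull hull_subset[of Q affine] by auto
  with q have qb: "inner (x' - x) q = \<beta>" by auto
  have dq: "dist x q = r" unfolding r_def using q s0 S x by (intro nearest_same_dist) auto
  have "(norm (q - x))\<^sup>2 - (norm (q - x'))\<^sup>2 = r\<^sup>2 - r'\<^sup>2"
  proof -
    have "2 * inner (x' - x) q = r\<^sup>2 - r'\<^sup>2 - (norm x)\<^sup>2 + (norm x')\<^sup>2" using qb unfolding \<beta>_def by simp
    then show ?thesis using norm_diff_sq_identity[of q x x'] by linarith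
  qed
  then have "(norm (q - x'))\<^sup>2 = r'\<^sup>2" using dq by (simp add: dist_norm norm_minus_commute)
  then have "norm (q - x') = r'" unfolding r'_def by (simp add: power2_eq_iff_nonneg)
  then have dq': "dist x' q = dist x' s0" unfolding r'_def by (simp add: dist_norm norm_minus_commute)
  have s0N: "s0 \<in> nearest A x'" using s0 S x' by auto
  have "q \<in> A" using q x unfolding nearest_def by auto
  then show "q \<in> Q'" using s0N dq' x' unfolding nearest_def by auto
qed

lemma count_cells:
  fixes A :: "'a::euclidean_space set"
  assumes B: "finite B" and F: "F \<subseteq> {Q \<in> delaunay_pcells A p. Q \<subseteq> B}"
  shows "finite F \<and> card F \<le> card B ^ Suc p"
proof -
  define f where "f Q = (SOME S. S \<subseteq> (Q::'a set) \<and> card S = Suc p \<and> affine hull S = affine hull Q)" for Q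
  have fQ: "f Q \<subseteq> Q \<and> card (f Q) = Suc p \<and> affine hull (f Q) = affine hull Q" if "Q \<in> F" for Q
  proof -
    have "Q \<in> delaunay_pcells A p" using that F by auto
    from cell_basis[OF this] have "\<exists>S. S \<subseteq> Q \<and> card S = Suc p \<and> affine hull S = affine hull Q" .
    then show ?thesis unfolding f_def by (rule someI_ex)
  qed
  have vs: "Q \<in> delaunay_vertex_sets A" if "Q \<in> F" for Q
    using that F unfolding delaunay_pcells_def by auto
  have inj: "inj_on f F"
  proof (rule inj_onI)
    fix Q Q' assume QF: "Q \<in> F" and Q'F: "Q' \<in> F" and eq: "f Q = f Q'"
    show "Q = Q'"
    proof
      have a: "f Q \<subseteq> Q" "affine hull (f Q) = affine hull Q" using fQ[OF QF] by auto
      have b: "f Q \<subseteq> Q'" "affine hull (f Q) = affine hull Q'" using fQ[OF Q'F] eq by auto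
      show "Q \<subseteq> Q'" by (rule cell_inj[OF vs[OF QF] vs[OF Q'F] a(1) b(1) a(2)])
      show "Q' \<subseteq> Q" by (rule cell_inj[OF vs[OF Q'F] vs[OF QF] b(1) a(1) b(2)])
    qed
  qed
  have img: "f ` F \<subseteq> {S. S \<subseteq> B \<and> card S = Suc p}"
  proof (rule image_subsetI)
    fix Q assume QF: "Q \<in> F"
    then have "Q \<subseteq> B" using F by auto
    with fQ[OF QF] show "f Q \<in> {S. S \<subseteq> B \<and> card S = Suc p}" by auto
  qed
  have finF: "finite F"
  proof -
    have "F \<subseteq> Pow B" using F by auto
    then show ?thesis using B finite_subset by blast
  qed
  have "card F = card (f ` F)" using inj by (simp add: card_image)
  also have "\<dots> \<le> card {S. S \<subseteq> B \<and> card S = Suc p}"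
    using img B by (intro card_mono) auto
  also have "\<dots> = card B choose Suc p" using B by (rule n_subsets)
  also have "\<dots> \<le> card B ^ Suc p"
  proof (cases "Suc p \<le> card B")
    case True
    then show ?thesis by (rule binomial_le_pow)
  next
    case False
    then have "card B choose Suc p = 0" by (intro binomial_eq_0) simp
    then show ?thesis by (metis le0)
  qed
  finally show ?thesis using finF by simp
qed



lemma spp_prob: "stationary_poisson_process M X lam \<Longrightarrow> prob_space M"
  unfolding stationary_poisson_process_def by auto

lemma spp_lam: "stationary_poisson_process M X lam \<Longrightarrow> lam > 0"
  unfolding stationary_poisson_process_def by auto

lemma spp_lf: "stationary_poisson_process M X lam \<Longrightarrow> w \<in> space M \<Longrightarrow> locally_finite_set (X w)"
  unfolding stationary_poisson_process_def by auto

lemma spp_meas: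
  "stationary_poisson_process M X lam \<Longrightarrow> B \<in> sets borel \<Longrightarrow> bounded B \<Longrightarrow>
    (\<lambda>w. card (X w \<inter> B)) \<in> measurable M (count_space UNIV)"
  unfolding stationary_poisson_process_def by auto

lemma spp_dist:
  "stationary_poisson_process M X lam \<Longrightarrow> B \<in> sets borel \<Longrightarrow> bounded B \<Longrightarrow>
    measure M {w \<in> space M. card (X w \<inter> B) = k}
      = (lam * measure lborel B) ^ k / fact k * exp (- (lam * measure lborel B))"
  unfolding stationary_poisson_process_def by auto

lemma spp_expect:
  fixes h :: "nat \<Rightarrow> ennreal"
  assumes spp: "stationary_poisson_process M X lam" and B: "B \<in> sets borel" "bounded B"
  shows "(\<integral>\<^sup>+ w. h (card (X w \<inter> B)) \<partial>M)
       = (\<Sum>i. h i * ennreal ((lam * measure lborel B) ^ i / fact i * exp (- (lam * measure lborel B))))"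
proof -
  interpret prob_space M using spp by (rule spp_prob)
  define N where "N w = card (X w \<inter> B)" for w
  have Nm[measurable]: "N \<in> measurable M (count_space UNIV)"
    unfolding N_def using spp B by (rule spp_meas)
  define S where "S i = {w \<in> space M. N w = i}" for i
  have Sm[measurable]: "S i \<in> sets M" for i
    unfolding S_def by measurable
  have "(\<integral>\<^sup>+ w. h (N w) \<partial>M) = (\<integral>\<^sup>+ w. (\<Sum>i. h i * indicator (S i) w) \<partial>M)"
  proof (rule nn_integral_cong)
    fix w assume w: "w \<in> space M"
    have "(\<Sum>i. h i * indicator (S i) w) = (\<Sum>i\<in>{N w}. h i * indicator (S i) w)"
      by (rule suminf_finite) (use w in \<open>auto simp: S_def\<close>)
    also have "\<dots> = h (N w)" using w by (simp add: S_def)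
    finally show "h (N w) = (\<Sum>i. h i * indicator (S i) w)" ..
  qed
  also have "\<dots> = (\<Sum>i. \<integral>\<^sup>+ w. h i * indicator (S i) w \<partial>M)"
    by (rule nn_integral_suminf) measurable
  also have "\<dots> = (\<Sum>i. h i * emeasure M (S i))"
    by (simp add: nn_integral_cmult_indicator)
  also have "\<dots> = (\<Sum>i. h i * ennreal ((lam * measure lborel B) ^ i / fact i * exp (- (lam * measure lborel B))))"
    by (simp add: emeasure_eq_measure S_def N_def spp_dist[OF spp B])
  finally show ?thesis unfolding N_def .
qed

lemma spp_void:
  assumes spp: "stationary_poisson_process M X lam" and B: "B \<in> sets borel" "bounded B"
  shows "emeasure M {w \<in> space M. card (X w \<inter> B) = 0} = ennreal (exp (- (lam * measure lborel B)))"
proof -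
  interpret prob_space M using spp by (rule spp_prob)
  show ?thesis using spp_dist[OF spp B, of 0] by (simp add: emeasure_eq_measure)
qed

lemma spp_mgf:
  assumes spp: "stationary_poisson_process M X lam" and B: "B \<in> sets borel" "bounded B"
  shows "(\<integral>\<^sup>+ w. ennreal (exp (t * real (card (X w \<inter> B)))) \<partial>M)
       = ennreal (exp (lam * measure lborel B * (exp t - 1)))"
proof -
  define \<mu> where "\<mu> = lam * measure lborel B"
  have "(\<integral>\<^sup>+ w. ennreal (exp (t * real (card (X w \<inter> B)))) \<partial>M)
      = (\<Sum>i. ennreal (exp (t * real i)) * ennreal (\<mu> ^ i / fact i * exp (- \<mu>)))"
    unfolding \<mu>_def by (rule spp_expect[OF spp B])
  also have "\<dots> = (\<Sum>i. ennreal (exp (- \<mu>) * ((\<mu> * exp t) ^ i / fact i)))"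
  proof (rule suminf_cong)
    fix i :: nat
    have "exp (t * real i) = exp t ^ i" using exp_of_nat_mult[of i t] by (simp add: mult.commute)
    then show "ennreal (exp (t * real i)) * ennreal (\<mu> ^ i / fact i * exp (- \<mu>))
        = ennreal (exp (- \<mu>) * ((\<mu> * exp t) ^ i / fact i))"
      by (simp add: ennreal_mult'[symmetric] power_mult_distrib mult_ac)
  qed
  also have "\<dots> = ennreal (\<Sum>i. exp (- \<mu>) * ((\<mu> * exp t) ^ i / fact i))"
  proof (rule suminf_ennreal2)
    have mu0: "\<mu> \<ge> 0" unfolding \<mu>_def using spp_lam[OF spp] by simp
    show "\<And>i. 0 \<le> exp (- \<mu>) * ((\<mu> * exp t) ^ i / fact i)" using mu0 by simp
    show "summable (\<lambda>i. exp (- \<mu>) * ((\<mu> * exp t) ^ i / fact i))"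
      using exp_converges[of "\<mu> * exp t"] by (intro summable_mult) (simp add: sums_iff divide_inverse mult.commute)
  qed
  also have "(\<Sum>i. exp (- \<mu>) * ((\<mu> * exp t) ^ i / fact i)) = exp (- \<mu>) * exp (\<mu> * exp t)"
  proof -
    have "(\<lambda>i. (\<mu> * exp t) ^ i / fact i) sums exp (\<mu> * exp t)"
      using exp_converges[of "\<mu> * exp t"] by (simp add: divide_inverse mult.commute)
    then show ?thesis by (intro sums_unique[symmetric] sums_mult)
  qed
  also have "exp (- \<mu>) * exp (\<mu> * exp t) = exp (\<mu> * (exp t - 1))"
    by (simp add: exp_add[symmetric] algebra_simps)
  finally show ?thesis unfolding \<mu>_def .
qed

lemma pow_le_fact_exp:
  fixes y :: real
  assumes "y \<ge> 0"
  shows "y ^ n \<le> fact n * exp y"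
proof -
  have s: "(\<lambda>i. y ^ i / fact i) sums exp y"
    using exp_converges[of y] by (simp add: divide_inverse mult.commute)
  have "(\<Sum>i\<in>{n}. y ^ i / fact i) \<le> (\<Sum>i. y ^ i / fact i)"
    using assms by (intro sum_le_suminf) (use s in \<open>auto simp: sums_iff\<close>)
  then have "y ^ n / fact n \<le> exp y" using s by (simp add: sums_iff)
  then show ?thesis by (simp add: divide_le_eq mult.commute)
qed

lemma spp_moment:
  assumes spp: "stationary_poisson_process M X lam" and B: "B \<in> sets borel" "bounded B"
  shows "(\<integral>\<^sup>+ w. ennreal (real (card (X w \<inter> B)) ^ n) \<partial>M)
       \<le> ennreal (fact n * (lam * measure lborel B + 1) ^ n * exp 3)"
proof -
  define \<mu> where "\<mu> = lam * measure lborel B"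
  have mu0: "\<mu> \<ge> 0" unfolding \<mu>_def using spp_lam[OF spp] by simp
  define t where "t = 1 / (\<mu> + 1)"
  have t0: "t > 0" "t \<le> 1" unfolding t_def using mu0 by (auto simp: field_simps)
  have Nm[measurable]: "(\<lambda>w. card (X w \<inter> B)) \<in> measurable M (count_space UNIV)"
    using spp B by (rule spp_meas)
  have pw: "real k ^ n \<le> fact n * (\<mu> + 1) ^ n * exp (t * real k)" for k :: nat
  proof -
    have "real k = (\<mu> + 1) * (t * real k)" unfolding t_def using mu0 by (simp add: field_simps)
    then have "real k ^ n = (\<mu> + 1) ^ n * (t * real k) ^ n" by (metis power_mult_distrib)
    also have "\<dots> \<le> (\<mu> + 1) ^ n * (fact n * exp (t * real k))"
      using t0 mu0 by (intro mult_left_mono pow_le_fact_exp) auto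
    finally show ?thesis by (simp add: mult_ac)
  qed
  have "(\<integral>\<^sup>+ w. ennreal (real (card (X w \<inter> B)) ^ n) \<partial>M)
      \<le> (\<integral>\<^sup>+ w. ennreal (fact n * (\<mu> + 1) ^ n) * ennreal (exp (t * real (card (X w \<inter> B)))) \<partial>M)"
  proof (intro nn_integral_mono)
    fix w
    have "ennreal (real (card (X w \<inter> B)) ^ n) \<le> ennreal (fact n * (\<mu> + 1) ^ n * exp (t * real (card (X w \<inter> B))))"
      by (intro ennreal_leI pw)
    also have "\<dots> = ennreal (fact n * (\<mu> + 1) ^ n) * ennreal (exp (t * real (card (X w \<inter> B))))"
      using mu0 by (intro ennreal_mult') auto
    finally show "ennreal (real (card (X w \<inter> B)) ^ n) \<le> ennreal (fact n * (\<mu> + 1) ^ n) * ennreal (exp (t * real (card (X w \<inter> B))))" .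
  qed
  also have "\<dots> = ennreal (fact n * (\<mu> + 1) ^ n) * (\<integral>\<^sup>+ w. ennreal (exp (t * real (card (X w \<inter> B)))) \<partial>M)"
    by (rule nn_integral_cmult) measurable
  also have "(\<integral>\<^sup>+ w. ennreal (exp (t * real (card (X w \<inter> B)))) \<partial>M) = ennreal (exp (\<mu> * (exp t - 1)))"
    unfolding \<mu>_def by (rule spp_mgf[OF spp B])
  finally have I: "(\<integral>\<^sup>+ w. ennreal (real (card (X w \<inter> B)) ^ n) \<partial>M)
      \<le> ennreal (fact n * (\<mu> + 1) ^ n) * ennreal (exp (\<mu> * (exp t - 1)))" .
  have E: "exp (\<mu> * (exp t - 1)) \<le> exp 3"
  proof -
    have "1 - t \<le> exp (- t)" using exp_ge_add_one_self[of "- t"] by simp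
    then have "(1 - t) * exp t \<le> exp (- t) * exp t" by (intro mult_right_mono) auto
    then have "exp t - 1 \<le> t * exp t" by (simp add: exp_minus field_simps)
    then have "\<mu> * (exp t - 1) \<le> \<mu> * (t * exp t)" using mu0 by (intro mult_left_mono)
    also have "\<mu> * (t * exp t) = (\<mu> * t) * exp t" by simp
    also have "\<dots> \<le> 1 * exp 1"
    proof (intro mult_mono)
      show "\<mu> * t \<le> 1" unfolding t_def using mu0 by (simp add: field_simps)
      show "exp t \<le> exp 1" using t0 by simp
    qed (use mu0 t0 in auto)
    also have "\<dots> \<le> 3" using exp_le by simp
    finally show ?thesis by simp
  qed
  have "ennreal (fact n * (\<mu> + 1) ^ n) * ennreal (exp (\<mu> * (exp t - 1)))
      = ennreal (fact n * (\<mu> + 1) ^ n * exp (\<mu> * (exp t - 1)))"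
    using mu0 by (intro ennreal_mult'[symmetric]) auto
  also have "\<dots> \<le> ennreal (fact n * (\<mu> + 1) ^ n * exp 3)"
    using mu0 E by (intro ennreal_leI mult_left_mono) auto
  finally show ?thesis using I unfolding \<mu>_def by simp
qed


lemma Bx_borel: "Bx k c \<in> sets borel" and Bx_bounded: "bounded (Bx k c)"
  unfolding Bx_def by auto

lemma Cc_borel: "Cc m j \<in> sets borel" and Cc_bounded: "bounded (Cc m j)"
  unfolding Cc_def by auto

lemma emeasure_lborel_Bx:
  fixes k :: "'a::euclidean_space"
  assumes "c \<ge> 0"
  shows "emeasure lborel (Bx k c) = ennreal ((2 * c) ^ DIM('a))"
  using assms by (simp add: Bx_def emeasure_lborel_cbox_eq inner_add_left inner_diff_left)

lemma measure_lborel_Bx: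
  fixes k :: "'a::euclidean_space"
  assumes "c \<ge> 0"
  shows "measure lborel (Bx k c) = (2 * c) ^ DIM('a)"
  using emeasure_lborel_Bx[OF assms, of k] assms by (simp add: measure_def)

lemma measure_lborel_Cc:
  fixes j :: "'a::euclidean_space"
  assumes "m \<ge> 0"
  shows "measure lborel (Cc m j) = m ^ DIM('a)"
  using assms by (simp add: Cc_def measure_def emeasure_lborel_cbox_eq inner_add_left)

lemma JJ_card:
  fixes k :: "'a::euclidean_space"
  assumes m: "m \<ge> 1"
  shows "finite (JJ k m) \<and> real (card (JJ k m)) \<le> (10 * real DIM('a)) ^ DIM('a)"
proof -
  define D where "D = real DIM('a)"
  have D1: "D \<ge> 1" unfolding D_def by (rule DIM_ge1)
  have c0: "5 * D * m \<ge> 0" using D1 m by simp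
  have "finite (JJ k m) \<and> real (card (JJ k m)) * m ^ DIM('a) \<le> (2 * (5 * D * m)) ^ DIM('a)"
  proof (rule lattice_count)
    show "m > 0" using m by simp
    show "Bx k (5 * D * m) \<in> sets lborel" using Bx_borel by simp
    show "emeasure lborel (Bx k (5 * D * m)) \<le> ennreal ((2 * (5 * D * m)) ^ DIM('a))"
      using emeasure_lborel_Bx[OF c0, of k] by simp
    show "JJ k m \<subseteq> lattice" unfolding JJ_def by auto
    show "(2 * (5 * D * m)) ^ DIM('a) \<ge> 0" using c0 by simp
    fix j assume j: "j \<in> JJ k m"
    show "box (m *\<^sub>R j) (m *\<^sub>R j + m *\<^sub>R One) \<subseteq> Bx k (5 * D * m)"
    proof
      fix y assume y: "y \<in> box (m *\<^sub>R j) (m *\<^sub>R j + m *\<^sub>R One)"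
      have "y \<in> Cc m j" using y box_subset_cbox unfolding Cc_def by blast
      from Cc_diam[OF this corner_in_Cc] m have "norm (y - m *\<^sub>R j) \<le> D * m" unfolding D_def by simp
      moreover have "norm (m *\<^sub>R j - k) \<le> 4 * D * m" using j unfolding JJ_def D_def by auto
      moreover have "norm (y - k) \<le> norm (y - m *\<^sub>R j) + norm (m *\<^sub>R j - k)"
        using norm_triangle_ineq[of "y - m *\<^sub>R j" "m *\<^sub>R j - k"] by simp
      ultimately have nk: "norm (y - k) \<le> 5 * D * m" by linarith
      show "y \<in> Bx k (5 * D * m)" unfolding Bx_def mem_box
      proof safe
        fix b :: 'a assume b: "b \<in> Basis"
        have "\<bar>(y - k) \<bullet> b\<bar> \<le> 5 * D * m" using inner_le_norm_Basis[OF b, of "y - k"] nk by linarith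
        then show "(k - (5 * D * m) *\<^sub>R One) \<bullet> b \<le> y \<bullet> b" "y \<bullet> b \<le> (k + (5 * D * m) *\<^sub>R One) \<bullet> b"
          using b by (auto simp: inner_diff_left inner_add_left abs_le_iff)
      qed
    qed
  qed
  moreover have "(2 * (5 * D * m)) ^ DIM('a) = (10 * D) ^ DIM('a) * m ^ DIM('a)"
  proof -
    have "2 * (5 * D * m) = (10 * D) * m" by simp
    then show ?thesis by (simp only: power_mult_distrib)
  qed
  moreover have "m ^ DIM('a) > 0" using m by simp
  ultimately have "finite (JJ k m)" "real (card (JJ k m)) * m ^ DIM('a) \<le> (10 * D) ^ DIM('a) * m ^ DIM('a)"
    by auto
  then show ?thesis using \<open>m ^ DIM('a) > 0\<close> unfolding D_def
    by (meson mult_le_cancel_right_pos)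
qed

lemma lf_card_eq_0:
  assumes "locally_finite_set A" "bounded B"
  shows "card (A \<inter> B) = 0 \<longleftrightarrow> A \<inter> B = {}"
proof -
  have "finite (A \<inter> B)" using assms unfolding locally_finite_set_def by auto
  then show ?thesis by simp
qed

lemma GA_set:
  assumes spp: "stationary_poisson_process M X lam" and m: "m \<ge> 1"
  shows "{w \<in> space M. \<not> GA (X w) k m} = (\<Union>j\<in>JJ k m. {w \<in> space M. card (X w \<inter> Cc m j) = 0})"
proof (intro set_eqI iffI)
  fix w assume w: "w \<in> {w \<in> space M. \<not> GA (X w) k m}"
  then obtain j where j: "j \<in> JJ k m" "X w \<inter> Cc m j = {}" unfolding GA_def by auto
  then have "card (X w \<inter> Cc m j) = 0" by simp
  then show "w \<in> (\<Union>j\<in>JJ k m. {w \<in> space M. card (X w \<inter> Cc m j) = 0})" using w j(1) by auto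
next
  fix w assume w: "w \<in> (\<Union>j\<in>JJ k m. {w \<in> space M. card (X w \<inter> Cc m j) = 0})"
  then obtain j where j: "j \<in> JJ k m" "w \<in> space M" "card (X w \<inter> Cc m j) = 0" by auto
  have "X w \<inter> Cc m j = {}" using j(3) lf_card_eq_0[OF spp_lf[OF spp j(2)] Cc_bounded] by simp
  then show "w \<in> {w \<in> space M. \<not> GA (X w) k m}" using j unfolding GA_def by auto
qed

lemma GA_sets:
  assumes spp: "stationary_poisson_process M X lam" and m: "m \<ge> 1"
  shows "{w \<in> space M. \<not> GA (X w) k m} \<in> sets M" "{w \<in> space M. GA (X w) k m} \<in> sets M"
proof -
  have fin: "finite (JJ k m)" using JJ_card[OF m] by auto
  have each: "{w \<in> space M. card (X w \<inter> Cc m j) = 0} \<in> sets M" for j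
  proof -
    have [measurable]: "(\<lambda>w. card (X w \<inter> Cc m j)) \<in> measurable M (count_space UNIV)"
      using spp Cc_borel Cc_bounded by (rule spp_meas)
    show ?thesis by measurable
  qed
  show 1: "{w \<in> space M. \<not> GA (X w) k m} \<in> sets M"
    unfolding GA_set[OF spp m] using fin each by (intro sets.finite_UN) auto
  have "{w \<in> space M. GA (X w) k m} = space M - {w \<in> space M. \<not> GA (X w) k m}" by auto
  then show "{w \<in> space M. GA (X w) k m} \<in> sets M" using 1 by auto
qed

lemma prob_notGA:
  fixes k :: "'a::euclidean_space"
  assumes spp: "stationary_poisson_process M X lam" and m: "m \<ge> 1"
  shows "emeasure M {w \<in> space M. \<not> GA (X w) k m}
     \<le> ennreal ((10 * real DIM('a)) ^ DIM('a) * exp (- (lam * m ^ DIM('a))))"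
proof -
  have fin: "finite (JJ k m)" and cJ: "real (card (JJ k m)) \<le> (10 * real DIM('a)) ^ DIM('a)"
    using JJ_card[OF m] by auto
  have each: "{w \<in> space M. card (X w \<inter> Cc m j) = 0} \<in> sets M" for j
  proof -
    have [measurable]: "(\<lambda>w. card (X w \<inter> Cc m j)) \<in> measurable M (count_space UNIV)"
      using spp Cc_borel Cc_bounded by (rule spp_meas)
    show ?thesis by measurable
  qed
  have "emeasure M {w \<in> space M. \<not> GA (X w) k m}
      \<le> (\<Sum>j\<in>JJ k m. emeasure M {w \<in> space M. card (X w \<inter> Cc m j) = 0})"
    unfolding GA_set[OF spp m] using fin each by (intro emeasure_subadditive_finite) auto
  also have "\<dots> = (\<Sum>j\<in>JJ k m. ennreal (exp (- (lam * m ^ DIM('a)))))"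
    using m by (intro sum.cong refl) (simp add: spp_void[OF spp Cc_borel Cc_bounded] measure_lborel_Cc)
  also have "\<dots> = ennreal (real (card (JJ k m)) * exp (- (lam * m ^ DIM('a))))"
    by (simp add: ennreal_of_nat_eq_real_of_nat ennreal_mult)
  also have "\<dots> \<le> ennreal ((10 * real DIM('a)) ^ DIM('a) * exp (- (lam * m ^ DIM('a))))"
    using cJ by (intro ennreal_leI mult_right_mono) auto
  finally show ?thesis .
qed

lemma amgm_ind:
  fixes a e :: real
  assumes "a \<ge> 0" "e > 0" "b = 0 \<or> b = 1"
  shows "b * a \<le> e * a\<^sup>2 + b / e"
proof (cases "b = 0")
  case True then show ?thesis using assms by simp
next
  case False
  then have b: "b = 1" using assms by auto
  have "0 \<le> (e * a - 1)\<^sup>2" by simp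
  then have "2 * e * a \<le> e\<^sup>2 * a\<^sup>2 + 1" by (simp add: power2_eq_square algebra_simps)
  then have "2 * a \<le> e * a\<^sup>2 + 1 / e" using assms by (simp add: field_simps power2_eq_square)
  then show ?thesis using b assms by simp
qed



lemma pow_diff_le:
  fixes u v :: real
  assumes "0 \<le> u" "u \<le> v"
  shows "v ^ Suc e - u ^ Suc e \<le> real (Suc e) * (v - u) * v ^ e"
proof (induction e)
  case 0 then show ?case by simp
next
  case (Suc e)
  have eq: "v ^ Suc (Suc e) - u ^ Suc (Suc e) = v * (v ^ Suc e - u ^ Suc e) + u ^ Suc e * (v - u)"
    by (simp add: algebra_simps)
  have "v * (v ^ Suc e - u ^ Suc e) \<le> v * (real (Suc e) * (v - u) * v ^ e)"
    using Suc assms by (intro mult_left_mono) auto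
  moreover have "u ^ Suc e * (v - u) \<le> v ^ Suc e * (v - u)"
    using assms by (intro mult_right_mono power_mono) auto
  ultimately have "v ^ Suc (Suc e) - u ^ Suc (Suc e) \<le> v * (real (Suc e) * (v - u) * v ^ e) + v ^ Suc e * (v - u)"
    unfolding eq by linarith
  also have "\<dots> = real (Suc (Suc e)) * (v - u) * v ^ Suc e" by (simp add: algebra_simps)
  finally show ?case .
qed

lemma annulus_count:
  fixes R a :: real
  assumes R: "R \<ge> 0" and a: "a \<ge> 0"
  defines "S \<equiv> {k \<in> (lattice :: 'a::euclidean_space set). R - a < norm k \<and> norm k < R + a}"
  shows "finite S \<and> real (card S) \<le> unit_ball_vol (real DIM('a)) * real DIM('a) * (2 * (a + real DIM('a)))
            * ((R + 1) * (1 + (a + real DIM('a)))) ^ (DIM('a) - 1)"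
proof -
  define D where "D = real DIM('a)"
  define d where "d = DIM('a)"
  have D1: "D \<ge> 1" unfolding D_def by (rule DIM_ge1)
  define a' where "a' = a + D"
  have a'0: "a' \<ge> 0" unfolding a'_def using a D1 by simp
  define \<omega> where "\<omega> = unit_ball_vol (real d)"
  have \<omega>0: "\<omega> \<ge> 0" unfolding \<omega>_def by simp
  define u where "u = max 0 (R - a')"
  define v where "v = R + a'"
  have uv: "0 \<le> u" "u \<le> v" "v - u \<le> 2 * a'" unfolding u_def v_def using R a'0 by auto
  define T where "T = cball (0::'a) v - ball 0 (R - a')"
  have Tm: "T \<in> sets lborel" unfolding T_def by auto
  have dpos: "d = Suc (d - 1)" unfolding d_def using DIM_positive[where 'a='a] by simp
  have ET: "emeasure lborel T \<le> ennreal (\<omega> * (v ^ d - u ^ d))"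
  proof (cases "R - a' \<ge> 0")
    case True
    have "emeasure lborel T = emeasure lborel (cball (0::'a) v) - emeasure lborel (ball (0::'a) (R - a'))"
      unfolding T_def
      by (rule emeasure_Diff) (use True uv in \<open>auto simp: emeasure_cball emeasure_ball v_def\<close>)
    also have "\<dots> = ennreal (\<omega> * v ^ d) - ennreal (\<omega> * (R - a') ^ d)"
      using True uv unfolding \<omega>_def d_def v_def by (simp add: emeasure_cball emeasure_ball)
    also have "\<dots> = ennreal (\<omega> * v ^ d - \<omega> * (R - a') ^ d)"
      using True \<omega>0 by (intro ennreal_minus) simp
    also have "(R - a') = u" unfolding u_def using True by simp
    finally show ?thesis by (simp add: algebra_simps)
  next
    case False
    then have "ball (0::'a) (R - a') = {}" by simp
    then have "T = cball 0 v" unfolding T_def by (simp only: Diff_empty)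
    then have "emeasure lborel T = ennreal (\<omega> * v ^ d)"
      using uv unfolding \<omega>_def d_def by (simp add: emeasure_cball)
    moreover have "u = 0" unfolding u_def using False by simp
    ultimately show ?thesis using dpos by (simp add: power_0_left)
  qed
  have V0: "\<omega> * (v ^ d - u ^ d) \<ge> 0" using uv \<omega>0 by (simp add: power_mono)
  have "finite S \<and> real (card S) * 1 ^ DIM('a) \<le> \<omega> * (v ^ d - u ^ d)"
  proof (rule lattice_count[OF _ Tm ET V0])
    show "S \<subseteq> lattice" unfolding S_def by auto
    fix j assume j: "j \<in> S"
    show "box (1 *\<^sub>R j) (1 *\<^sub>R j + 1 *\<^sub>R One) \<subseteq> T"
    proof
      fix y assume y: "y \<in> box (1 *\<^sub>R j) (1 *\<^sub>R j + 1 *\<^sub>R One)"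
      have "y \<in> Cc 1 j" using y box_subset_cbox unfolding Cc_def by blast
      from Cc_diam[OF this corner_in_Cc] have "norm (y - j) \<le> D" unfolding D_def by simp
      moreover have "norm y \<le> norm j + norm (y - j)" "norm j \<le> norm y + norm (y - j)"
        using norm_triangle_ineq[of j "y - j"] norm_triangle_ineq[of y "j - y"]
        by (auto simp: norm_minus_commute)
      moreover have "R - a < norm j" "norm j < R + a" using j unfolding S_def by auto
      ultimately show "y \<in> T" unfolding T_def v_def a'_def by auto
    qed
  qed simp
  then have fS: "finite S" and cS: "real (card S) \<le> \<omega> * (v ^ d - u ^ d)" by auto
  have "v ^ d - u ^ d \<le> real d * (v - u) * v ^ (d - 1)"
    using pow_diff_le[OF uv(1,2), of "d - 1"] dpos by simp
  also have "\<dots> \<le> real d * (2 * a') * v ^ (d - 1)"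
    using uv by (intro mult_right_mono mult_left_mono) auto
  also have "\<dots> \<le> real d * (2 * a') * ((R + 1) * (1 + a')) ^ (d - 1)"
  proof (intro mult_left_mono power_mono)
    show "v \<le> (R + 1) * (1 + a')" unfolding v_def using R a'0 by (simp add: algebra_simps)
  qed (use uv a'0 in auto)
  finally have diff: "v ^ d - u ^ d \<le> real d * (2 * a') * ((R + 1) * (1 + a')) ^ (d - 1)" .
  have "\<omega> * (v ^ d - u ^ d) \<le> \<omega> * (real d * (2 * a') * ((R + 1) * (1 + a')) ^ (d - 1))"
    using \<omega>0 diff by (rule mult_left_mono[rotated])
  with cS have "real (card S) \<le> \<omega> * (real d * (2 * a') * ((R + 1) * (1 + a')) ^ (d - 1))"
    by (rule order_trans)
  then show ?thesis using fS unfolding \<omega>_def d_def a'_def D_def by (simp add: mult_ac)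
qed


lemma pow_le_fact_exp2:
  fixes y :: real
  assumes "y \<ge> 0"
  shows "y ^ n \<le> fact n * exp y"
proof -
  have s: "(\<lambda>i. y ^ i / fact i) sums exp y"
    using exp_converges[of y] by (simp add: divide_inverse mult.commute)
  have "(\<Sum>i\<in>{n}. y ^ i / fact i) \<le> (\<Sum>i. y ^ i / fact i)"
    using assms by (intro sum_le_suminf) (use s in \<open>auto simp: sums_iff\<close>)
  then have "y ^ n / fact n \<le> exp y" using s by (simp add: sums_iff)
  then show ?thesis by (simp add: divide_le_eq mult.commute)
qed

definition PB :: "(nat \<Rightarrow> real) \<Rightarrow> bool" where
  "PB f \<longleftrightarrow> (\<exists>C Q. \<forall>n. \<bar>f n\<bar> \<le> C * real (Suc n) ^ Q)"

lemma PB_const: "PB (\<lambda>n. c)"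
  unfolding PB_def by (rule exI[of _ "\<bar>c\<bar>"], rule exI[of _ 0]) simp

lemma PB_id: "PB (\<lambda>n. real (Suc n))"
  unfolding PB_def by (rule exI[of _ 1], rule exI[of _ 1]) simp

lemma PB_mult:
  assumes "PB f" "PB g"
  shows "PB (\<lambda>n. f n * g n)"
proof -
  obtain C1 Q1 where 1: "\<And>n. \<bar>f n\<bar> \<le> C1 * real (Suc n) ^ Q1" using assms(1) unfolding PB_def by auto
  obtain C2 Q2 where 2: "\<And>n. \<bar>g n\<bar> \<le> C2 * real (Suc n) ^ Q2" using assms(2) unfolding PB_def by auto
  have "\<bar>f n * g n\<bar> \<le> (C1 * C2) * real (Suc n) ^ (Q1 + Q2)" for n
  proof -
    have "\<bar>f n * g n\<bar> = \<bar>f n\<bar> * \<bar>g n\<bar>" by (simp add: abs_mult)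
    also have "\<dots> \<le> (C1 * real (Suc n) ^ Q1) * (C2 * real (Suc n) ^ Q2)"
      using 1[of n] 2[of n] by (intro mult_mono) auto
    also have "\<dots> = (C1 * C2) * real (Suc n) ^ (Q1 + Q2)" by (simp add: power_add mult_ac)
    finally show ?thesis .
  qed
  then show ?thesis unfolding PB_def by blast
qed

lemma PB_add:
  assumes "PB f" "PB g"
  shows "PB (\<lambda>n. f n + g n)"
proof -
  obtain C1 Q1 where 1: "\<And>n. \<bar>f n\<bar> \<le> C1 * real (Suc n) ^ Q1" using assms(1) unfolding PB_def by auto
  obtain C2 Q2 where 2: "\<And>n. \<bar>g n\<bar> \<le> C2 * real (Suc n) ^ Q2" using assms(2) unfolding PB_def by auto
  have C1: "C1 \<ge> 0" using 1[of 0] abs_ge_zero[of "f 0"] by simp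
  have C2: "C2 \<ge> 0" using 2[of 0] abs_ge_zero[of "g 0"] by simp
  have "\<bar>f n + g n\<bar> \<le> (C1 + C2) * real (Suc n) ^ (Q1 + Q2)" for n
  proof -
    have p1: "real (Suc n) ^ Q1 \<le> real (Suc n) ^ (Q1 + Q2)" by (intro power_increasing) auto
    have p2: "real (Suc n) ^ Q2 \<le> real (Suc n) ^ (Q1 + Q2)" by (intro power_increasing) auto
    have "\<bar>f n + g n\<bar> \<le> \<bar>f n\<bar> + \<bar>g n\<bar>" by simp
    also have "\<dots> \<le> C1 * real (Suc n) ^ (Q1 + Q2) + C2 * real (Suc n) ^ (Q1 + Q2)"
      using 1[of n] 2[of n] mult_left_mono[OF p1 C1] mult_left_mono[OF p2 C2] by linarith
    finally show ?thesis by (simp add: algebra_simps)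
  qed
  then show ?thesis unfolding PB_def by blast
qed

lemma PB_pow:
  assumes "PB f"
  shows "PB (\<lambda>n. f n ^ k)"
proof (induction k)
  case 0 then show ?case using PB_const[of 1] by simp
next
  case (Suc k)
  then show ?case using PB_mult[OF assms Suc] by simp
qed

lemma summable_PB_exp:
  assumes P: "PB P" and c: "c > 0"
  shows "summable (\<lambda>n. P n * exp (- c * real n))"
proof -
  obtain C Q where CQ: "\<And>n. \<bar>P n\<bar> \<le> C * real (Suc n) ^ Q" using P unfolding PB_def by auto
  have C: "C \<ge> 0" using CQ[of 0] abs_ge_zero[of "P 0"] by simp
  define K where "K = C * (fact Q * (2 / c) ^ Q * exp (c / 2))"
  show ?thesis
  proof (rule summable_comparison_test')
    show "summable (\<lambda>n. K * exp (- c / 2) ^ n)"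
      using c by (intro summable_mult summable_geometric) simp
    fix n :: nat
    have y: "real (Suc n) ^ Q \<le> (2 / c) ^ Q * (fact Q * exp (c * real (Suc n) / 2))"
    proof -
      have "real (Suc n) = (2 / c) * (c * real (Suc n) / 2)" using c by simp
      then have "real (Suc n) ^ Q = (2 / c) ^ Q * (c * real (Suc n) / 2) ^ Q" by (metis power_mult_distrib)
      also have "\<dots> \<le> (2 / c) ^ Q * (fact Q * exp (c * real (Suc n) / 2))"
        using c by (intro mult_left_mono pow_le_fact_exp2) auto
      finally show ?thesis .
    qed
    have "norm (P n * exp (- c * real n)) = \<bar>P n\<bar> * exp (- c * real n)" by (simp add: abs_mult)
    also have "\<dots> \<le> C * real (Suc n) ^ Q * exp (- c * real n)"
      using CQ[of n] by (intro mult_right_mono) auto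
    also have "\<dots> \<le> C * ((2 / c) ^ Q * (fact Q * exp (c * real (Suc n) / 2))) * exp (- c * real n)"
      using y C by (intro mult_right_mono mult_left_mono) auto
    also have "\<dots> = K * (exp (c * real (Suc n) / 2) * exp (- c * real n)) / exp (c / 2)"
      unfolding K_def by (simp add: field_simps)
    also have "exp (c * real (Suc n) / 2) * exp (- c * real n) = exp (c / 2) * exp (- c / 2) ^ n"
    proof -
      have e: "c * real (Suc n) / 2 + - c * real n = c / 2 + real n * (- c / 2)"
        by (simp add: field_simps)
      have "exp (c * real (Suc n) / 2) * exp (- c * real n) = exp (c * real (Suc n) / 2 + - c * real n)"
        by (simp only: exp_add)
      also have "\<dots> = exp (c / 2 + real n * (- c / 2))" by (simp only: e)
      also have "\<dots> = exp (c / 2) * exp (real n * (- c / 2))" by (simp only: exp_add)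
      also have "\<dots> = exp (c / 2) * exp (- c / 2) ^ n" by (simp only: exp_of_nat_mult)
      finally show ?thesis .
    qed
    finally show "norm (P n * exp (- c * real n)) \<le> K * exp (- c / 2) ^ n" by simp
  qed
qed




definition annk :: "real \<Rightarrow> 'a::euclidean_space \<Rightarrow> nat \<Rightarrow> bool" where
  "annk R k n \<longleftrightarrow> R - 5 * real DIM('a) * real (Suc n) < norm k \<and> norm k < R + 5 * real DIM('a) * real (Suc n)"

definition hA :: "'a::euclidean_space set \<Rightarrow> real \<Rightarrow> nat \<Rightarrow> 'a \<Rightarrow> ennreal" where
  "hA A R p k = (\<Sum>n. (if GA A k (real (Suc n)) \<and> (n = 0 \<or> \<not> GA A k (real n)) \<and> annk R k n
        then ennreal ((8 * real DIM('a) * real (Suc n)) ^ DIM('a)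
                 * real (card (A \<inter> Bx k (5 * real DIM('a) * real (Suc n)))) ^ Suc p) else 0))
     + (if \<forall>n. \<not> GA A k (real (Suc n)) then \<top> else 0)"

definition q0 :: "'a set \<Rightarrow> 'a" where "q0 Q = (SOME q. q \<in> Q)"

lemma fiber_bound:
  fixes A :: "'a::euclidean_space set"
  assumes lf: "locally_finite_set A"
    and F: "F \<subseteq> {Q \<in> delaunay_pcells A p. boundary_tile (ball 0 R) (ptile A p Q)}"
  shows "(\<Sum>Q\<in>{Q\<in>F. latf (q0 Q) = k}. tile_measure p (ptile A p Q)) \<le> hA A R p k"
proof (cases "\<forall>n. \<not> GA A k (real (Suc n))")
  case True
  then show ?thesis unfolding hA_def by simp
next
  case False
  define D where "D = real DIM('a)"
  have D1: "D \<ge> 1" unfolding D_def by (rule DIM_ge1)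
  define n0 where "n0 = (LEAST n. GA A k (real (Suc n)))"
  have G0: "GA A k (real (Suc n0))" unfolding n0_def using False by (metis LeastI)
  have Gprev: "n0 = 0 \<or> \<not> GA A k (real n0)"
  proof (cases n0)
    case (Suc n1)
    have "\<not> GA A k (real (Suc n1))" using not_less_Least[of n1 "\<lambda>n. GA A k (real (Suc n))"] Suc n0_def by simp
    then show ?thesis using Suc by simp
  qed simp
  define m where "m = real (Suc n0)"
  have m1: "m \<ge> 1" unfolding m_def by simp
  have Dm: "D \<le> D * m" using D1 m1 by simp
  define B where "B = A \<inter> Bx k (5 * D * m)"
  have finB: "finite B" using lf Bx_bounded unfolding B_def locally_finite_set_def by auto
  define Fk where "Fk = {Q\<in>F. latf (q0 Q) = k}"
  have facts: "tile_measure p (ptile A p Q) \<le> ennreal ((8 * D * m) ^ DIM('a)) \<and> annk R k n0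
      \<and> Q \<in> delaunay_pcells A p \<and> Q \<subseteq> B" if Q: "Q \<in> Fk" for Q
  proof -
    have Qc: "Q \<in> delaunay_pcells A p" and bt: "boundary_tile (ball 0 R) (ptile A p Q)"
      using Q F unfolding Fk_def by auto
    have Qv: "Q \<in> delaunay_vertex_sets A" using Qc unfolding delaunay_pcells_def by auto
    then have "Q \<noteq> {}" unfolding delaunay_vertex_sets_def by auto
    then have q0Q: "q0 Q \<in> Q" unfolding q0_def by (metis ex_in_conv someI)
    have kq: "latf (q0 Q) = k" using Q unfolding Fk_def by auto
    have nk: "norm (q0 Q - k) \<le> D" using norm_latf[of "q0 Q"] kq unfolding D_def by simp
    have C1: "dist x (q0 Q) < 4 * D * m" if "(x, L) \<in> ptile A p Q" for x L
      using geo_C1[OF q0Q _ m1 _ that] nk G0 unfolding D_def m_def by simp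
    have tm: "tile_measure p (ptile A p Q) \<le> ennreal ((2 * (4 * D * m)) ^ DIM('a))"
      using D1 m1 by (intro tile_measure_bound[of _ "q0 Q"] C1) auto
    have "R - 4 * D * m - D < norm k \<and> norm k < R + 4 * D * m + D"
      by (rule geo_boundary[OF bt C1 nk])
    then have ann: "annk R k n0" unfolding annk_def D_def[symmetric] m_def[symmetric] using Dm by auto
    have G0': "GA A k m" using G0 unfolding m_def .
    have "Q \<subseteq> Bx k (5 * real DIM('a) * m)" using geo_Q[OF Qv q0Q _ m1 G0'] nk unfolding D_def by simp
    moreover have "Q \<subseteq> A" using Qv unfolding delaunay_vertex_sets_def nearest_def by auto
    ultimately have "Q \<subseteq> B" unfolding B_def D_def by auto
    moreover have "(2 * (4 * D * m)) ^ DIM('a) = (8 * D * m) ^ DIM('a)"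
    proof -
      have "2 * (4 * D * m) = 8 * D * m" by simp
      then show ?thesis by (simp only:)
    qed
    ultimately show ?thesis using tm ann Qc by simp
  qed
  show ?thesis
  proof (cases "Fk = {}")
    case True
    then have "(\<Sum>Q\<in>{Q\<in>F. latf (q0 Q) = k}. tile_measure p (ptile A p Q)) = 0"
      unfolding Fk_def by (simp only: sum.empty)
    then show ?thesis by simp
  next
    case False
    then obtain Q1 where Q1: "Q1 \<in> Fk" by auto
    have ann: "annk R k n0" using facts[OF Q1] by simp
    have cF: "finite Fk \<and> card Fk \<le> card B ^ Suc p"
      using facts by (intro count_cells[OF finB]) auto
    define T where "T n = (if GA A k (real (Suc n)) \<and> (n = 0 \<or> \<not> GA A k (real n)) \<and> annk R k n
        then ennreal ((8 * real DIM('a) * real (Suc n)) ^ DIM('a)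
                 * real (card (A \<inter> Bx k (5 * real DIM('a) * real (Suc n)))) ^ Suc p) else 0)" for n
    have "(\<Sum>Q\<in>Fk. tile_measure p (ptile A p Q)) \<le> of_nat (card Fk) * ennreal ((8 * D * m) ^ DIM('a))"
      using facts by (intro sum_bounded_above) auto
    also have "\<dots> \<le> of_nat (card B ^ Suc p) * ennreal ((8 * D * m) ^ DIM('a))"
    proof (rule mult_right_mono)
      show "of_nat (card Fk) \<le> (of_nat (card B ^ Suc p) :: ennreal)"
        using cF by (intro of_nat_mono) simp
    qed simp
    also have "\<dots> = T n0"
      unfolding T_def using G0 Gprev ann D1 m1
      by (simp add: B_def D_def m_def ennreal_mult' ennreal_of_nat_eq_real_of_nat mult.commute)
    also have "\<dots> \<le> (\<Sum>n. T n)"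
      using sum_le_suminf[of T "{n0}"] by simp
    also have "\<dots> \<le> hA A R p k" unfolding hA_def T_def by simp
    finally show ?thesis unfolding Fk_def .
  qed
qed


lemma pointwise:
  fixes A :: "'a::euclidean_space set"
  assumes lf: "locally_finite_set A"
  shows "boundary_ptile_measure A p (ball 0 R) \<le> (\<integral>\<^sup>+ k. hA A R p k \<partial>count_space lattice)"
  unfolding boundary_ptile_measure_def
proof (rule infsum_le_finite_sums)
  fix F assume finF: "finite F"
    and F: "F \<subseteq> {Q \<in> delaunay_pcells A p. boundary_tile (ball 0 R) (ptile A p Q)}"
  define K where "K = (\<lambda>Q. latf (q0 Q)) ` F"
  have finK: "finite K" unfolding K_def using finF by simp
  have KL: "K \<subseteq> lattice" unfolding K_def using latf_in by auto
  have "(\<Sum>Q\<in>F. tile_measure p (ptile A p Q))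
      = (\<Sum>k\<in>K. \<Sum>Q\<in>{Q\<in>F. latf (q0 Q) = k}. tile_measure p (ptile A p Q))"
    unfolding K_def using finF by (rule sum.image_gen)
  also have "\<dots> \<le> (\<Sum>k\<in>K. hA A R p k)"
    by (intro sum_mono fiber_bound[OF lf F])
  also have "\<dots> = (\<Sum>k\<in>K. hA A R p k * indicator K k)"
    by (intro sum.cong) auto
  also have "\<dots> = (\<integral>\<^sup>+ k. hA A R p k * indicator K k \<partial>count_space lattice)"
    by (rule nn_integral_count_space'[symmetric]) (use finK KL in auto)
  also have "\<dots> \<le> (\<integral>\<^sup>+ k. hA A R p k \<partial>count_space lattice)"
    by (intro nn_integral_mono) (auto split: split_indicator)
  finally show "(\<Sum>Q\<in>F. tile_measure p (ptile A p Q)) \<le> (\<integral>\<^sup>+ k. hA A R p k \<partial>count_space lattice)" .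
qed (rule nonneg_summable_on_complete, simp)


lemma exp_neg_le_inv:
  fixes y :: real
  assumes "y > 0"
  shows "exp (- y) \<le> 1 / y"
proof -
  have "y \<le> exp y" using exp_ge_add_one_self[of y] by linarith
  then show ?thesis using assms by (simp add: exp_minus field_simps)
qed

lemma Nev_null:
  fixes k :: "'a::euclidean_space"
  assumes spp: "stationary_poisson_process M X lam"
  shows "emeasure M {w \<in> space M. \<forall>n. \<not> GA (X w) k (real (Suc n))} = 0"
proof -
  have lam: "lam > 0" using spp_lam[OF spp] .
  define K where "K = (10 * real DIM('a)) ^ DIM('a)"
  have K0: "K \<ge> 0" unfolding K_def by simp
  define Nev where "Nev = {w \<in> space M. \<forall>n. \<not> GA (X w) k (real (Suc n))}"
  have sub: "Nev \<subseteq> {w \<in> space M. \<not> GA (X w) k (real (Suc n))}" for n unfolding Nev_def by auto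
  have bound: "emeasure M Nev \<le> ennreal (K / (lam * real (Suc n)))" for n
  proof -
    have "emeasure M Nev \<le> emeasure M {w \<in> space M. \<not> GA (X w) k (real (Suc n))}"
      using sub GA_sets(1)[OF spp, of "real (Suc n)" k] by (intro emeasure_mono) auto
    also have "\<dots> \<le> ennreal (K * exp (- (lam * real (Suc n) ^ DIM('a))))"
      unfolding K_def by (rule prob_notGA[OF spp]) simp
    also have "\<dots> \<le> ennreal (K / (lam * real (Suc n)))"
    proof (intro ennreal_leI)
      have "real (Suc n) \<le> real (Suc n) ^ DIM('a)"
        using DIM_positive[where 'a='a] by (intro self_le_power) auto
      then have "lam * real (Suc n) \<le> lam * real (Suc n) ^ DIM('a)" using lam by simp
      then have "exp (- (lam * real (Suc n) ^ DIM('a))) \<le> exp (- (lam * real (Suc n)))" by simp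
      also have "\<dots> \<le> 1 / (lam * real (Suc n))" using lam by (intro exp_neg_le_inv) simp
      finally have "K * exp (- (lam * real (Suc n) ^ DIM('a))) \<le> K * (1 / (lam * real (Suc n)))"
        using K0 by (intro mult_left_mono)
      then show "K * exp (- (lam * real (Suc n) ^ DIM('a))) \<le> K / (lam * real (Suc n))" by simp
    qed
    finally show ?thesis .
  qed
  have "emeasure M Nev \<le> 0"
  proof (rule ennreal_le_epsilon)
    fix e :: real assume e: "0 < e"
    obtain n :: nat where n: "K / (lam * e) < real n" using reals_Archimedean2 by blast
    have "K / (lam * real (Suc n)) \<le> e"
    proof -
      have "K / (lam * e) < real (Suc n)" using n by simp
      then have "K < real (Suc n) * (lam * e)" using lam e by (simp add: divide_less_eq)
      then show ?thesis using lam by (simp add: divide_le_eq mult_ac)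
    qed
    then have "emeasure M Nev \<le> ennreal e" using bound[of n] by (meson ennreal_leI order_trans)
    then show "emeasure M Nev \<le> 0 + ennreal e" by simp
  qed
  then show ?thesis unfolding Nev_def by simp
qed


lemma Es_sets:
  fixes k :: "'a::euclidean_space"
  assumes spp: "stationary_poisson_process M X lam"
  shows "{w \<in> space M. GA (X w) k (real (Suc n)) \<and> (n = 0 \<or> \<not> GA (X w) k (real n))} \<in> sets M"
proof (cases n)
  case 0
  then show ?thesis using GA_sets(2)[OF spp, of "real (Suc 0)" k] by simp
next
  case (Suc n')
  have "{w \<in> space M. GA (X w) k (real (Suc n)) \<and> (n = 0 \<or> \<not> GA (X w) k (real n))}
      = {w \<in> space M. GA (X w) k (real (Suc n))} \<inter> {w \<in> space M. \<not> GA (X w) k (real (Suc n'))}"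
    using Suc by auto
  then show ?thesis using GA_sets(2)[OF spp, of "real (Suc n)" k] GA_sets(1)[OF spp, of "real (Suc n')" k] by auto
qed

lemma Es_prob:
  fixes k :: "'a::euclidean_space"
  assumes spp: "stationary_poisson_process M X lam"
  shows "emeasure M {w \<in> space M. GA (X w) k (real (Suc n)) \<and> (n = 0 \<or> \<not> GA (X w) k (real n))}
     \<le> ennreal (((10 * real DIM('a)) ^ DIM('a) + 1) * exp (- (lam * real n ^ DIM('a))))"
proof (cases n)
  case 0
  interpret prob_space M using spp by (rule spp_prob)
  have "emeasure M {w \<in> space M. GA (X w) k (real (Suc n)) \<and> (n = 0 \<or> \<not> GA (X w) k (real n))} \<le> 1"
    by (rule emeasure_le_1)
  also have "1 \<le> ennreal (((10 * real DIM('a)) ^ DIM('a) + 1) * exp (- (lam * real n ^ DIM('a))))"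
    using 0 DIM_positive[where 'a='a] by (simp add: power_0_left)
  finally show ?thesis .
next
  case (Suc n')
  have "emeasure M {w \<in> space M. GA (X w) k (real (Suc n)) \<and> (n = 0 \<or> \<not> GA (X w) k (real n))}
      \<le> emeasure M {w \<in> space M. \<not> GA (X w) k (real n)}"
    using GA_sets(1)[OF spp, of "real n" k] Suc by (intro emeasure_mono) auto
  also have "\<dots> \<le> ennreal ((10 * real DIM('a)) ^ DIM('a) * exp (- (lam * real n ^ DIM('a))))"
    using Suc by (intro prob_notGA[OF spp]) simp
  also have "\<dots> \<le> ennreal (((10 * real DIM('a)) ^ DIM('a) + 1) * exp (- (lam * real n ^ DIM('a))))"
    by (intro ennreal_leI mult_right_mono) auto
  finally show ?thesis .
qed

lemma expect_term:
  fixes k :: "'a::euclidean_space"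
  assumes spp: "stationary_poisson_process M X lam"
  defines "D \<equiv> real DIM('a)"
  shows "(\<integral>\<^sup>+ w. indicator {w \<in> space M. GA (X w) k (real (Suc n)) \<and> (n = 0 \<or> \<not> GA (X w) k (real n))} w
           * ennreal ((8 * D * real (Suc n)) ^ DIM('a) * real (card (X w \<inter> Bx k (5 * D * real (Suc n)))) ^ Suc p) \<partial>M)
     \<le> ennreal ((8 * D * real (Suc n)) ^ DIM('a) * exp (- (lam * real n ^ DIM('a)) / 2)
           * (fact (2 * Suc p) * (lam * (10 * D * real (Suc n)) ^ DIM('a) + 1) ^ (2 * Suc p) * exp 3
              + ((10 * D) ^ DIM('a) + 1)))"
proof -
  interpret prob_space M using spp by (rule spp_prob)
  define E where "E = {w \<in> space M. GA (X w) k (real (Suc n)) \<and> (n = 0 \<or> \<not> GA (X w) k (real n))}"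
  have Em[measurable]: "E \<in> sets M" unfolding E_def by (rule Es_sets[OF spp])
  define B where "B = Bx k (5 * D * real (Suc n))"
  have Bb: "B \<in> sets borel" "bounded B" unfolding B_def by (auto intro: Bx_borel Bx_bounded)
  have Nm[measurable]: "(\<lambda>w. card (X w \<inter> B)) \<in> measurable M (count_space UNIV)"
    using spp Bb by (rule spp_meas)
  define c8 where "c8 = (8 * D * real (Suc n)) ^ DIM('a)"
  have c80: "c8 \<ge> 0" unfolding c8_def D_def by simp
  define \<epsilon> where "\<epsilon> = exp (- (lam * real n ^ DIM('a)) / 2)"
  have \<epsilon>0: "\<epsilon> > 0" unfolding \<epsilon>_def by simp
  define K' where "K' = (10 * D) ^ DIM('a) + 1"
  define \<pi> where "\<pi> = K' * exp (- (lam * real n ^ DIM('a)))"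
  have \<pi>\<epsilon>: "\<pi> / \<epsilon> = K' * \<epsilon>"
  proof -
    have "exp (- (lam * real n ^ DIM('a))) = \<epsilon> * \<epsilon>"
      unfolding \<epsilon>_def by (simp add: exp_add[symmetric])
    then show ?thesis unfolding \<pi>_def using \<epsilon>0 by simp
  qed
  define \<mu> where "\<mu> = lam * measure lborel B"
  have \<mu>eq: "\<mu> = lam * (10 * D * real (Suc n)) ^ DIM('a)"
  proof -
    have "measure lborel B = (2 * (5 * D * real (Suc n))) ^ DIM('a)"
      unfolding B_def D_def by (intro measure_lborel_Bx) simp
    also have "2 * (5 * D * real (Suc n)) = 10 * D * real (Suc n)" by simp
    finally show ?thesis unfolding \<mu>_def by simp
  qed
  define Fm where "Fm = fact (2 * Suc p) * (\<mu> + 1) ^ (2 * Suc p) * exp 3"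
  have pw: "indicator E w * ennreal (c8 * real (card (X w \<inter> B)) ^ Suc p)
      \<le> ennreal (c8 * \<epsilon>) * ennreal (real (card (X w \<inter> B)) ^ (2 * Suc p)) + ennreal (c8 / \<epsilon>) * indicator E w" for w
  proof (cases "w \<in> E")
    case True
    define a where "a = real (card (X w \<inter> B)) ^ Suc p"
    have a0: "a \<ge> 0" unfolding a_def by simp
    have "1 * a \<le> \<epsilon> * a\<^sup>2 + 1 / \<epsilon>" by (rule amgm_ind[OF a0 \<epsilon>0]) simp
    then have "c8 * a \<le> c8 * (\<epsilon> * a\<^sup>2 + 1 / \<epsilon>)" using c80 by (intro mult_left_mono) auto
    also have "c8 * (\<epsilon> * a\<^sup>2 + 1 / \<epsilon>) = (c8 * \<epsilon>) * a\<^sup>2 + c8 / \<epsilon>"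
      by (simp only: distrib_left mult.assoc times_divide_eq_right mult_1_right)
    finally have r: "c8 * a \<le> (c8 * \<epsilon>) * a\<^sup>2 + c8 / \<epsilon>" .
    have e1: "ennreal ((c8 * \<epsilon>) * a\<^sup>2 + c8 / \<epsilon>) = ennreal ((c8 * \<epsilon>) * a\<^sup>2) + ennreal (c8 / \<epsilon>)"
      using c80 \<epsilon>0 a0 by (intro ennreal_plus) auto
    have e2: "ennreal ((c8 * \<epsilon>) * a\<^sup>2) = ennreal (c8 * \<epsilon>) * ennreal (a\<^sup>2)"
      using c80 \<epsilon>0 by (intro ennreal_mult') auto
    have e3: "a\<^sup>2 = real (card (X w \<inter> B)) ^ (2 * Suc p)"
      unfolding a_def by (simp only: power_mult[symmetric] mult.commute)
    have "ennreal (c8 * a) \<le> ennreal ((c8 * \<epsilon>) * a\<^sup>2 + c8 / \<epsilon>)"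
      using r by (rule ennreal_leI)
    also have "\<dots> = ennreal (c8 * \<epsilon>) * ennreal (a\<^sup>2) + ennreal (c8 / \<epsilon>)"
      using e1 e2 by simp
    finally have "ennreal (c8 * a) \<le> ennreal (c8 * \<epsilon>) * ennreal (real (card (X w \<inter> B)) ^ (2 * Suc p)) + ennreal (c8 / \<epsilon>)"
      unfolding e3 .
    then show ?thesis using True unfolding a_def by simp
  qed simp
  have "(\<integral>\<^sup>+ w. indicator E w * ennreal (c8 * real (card (X w \<inter> B)) ^ Suc p) \<partial>M)
      \<le> (\<integral>\<^sup>+ w. ennreal (c8 * \<epsilon>) * ennreal (real (card (X w \<inter> B)) ^ (2 * Suc p)) + ennreal (c8 / \<epsilon>) * indicator E w \<partial>M)"
    by (intro nn_integral_mono pw)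
  also have "\<dots> = (\<integral>\<^sup>+ w. ennreal (c8 * \<epsilon>) * ennreal (real (card (X w \<inter> B)) ^ (2 * Suc p)) \<partial>M)
      + (\<integral>\<^sup>+ w. ennreal (c8 / \<epsilon>) * indicator E w \<partial>M)"
    by (rule nn_integral_add) measurable
  also have "\<dots> = ennreal (c8 * \<epsilon>) * (\<integral>\<^sup>+ w. ennreal (real (card (X w \<inter> B)) ^ (2 * Suc p)) \<partial>M)
      + ennreal (c8 / \<epsilon>) * emeasure M E"
  proof -
    have "(\<integral>\<^sup>+ w. ennreal (c8 * \<epsilon>) * ennreal (real (card (X w \<inter> B)) ^ (2 * Suc p)) \<partial>M)
        = ennreal (c8 * \<epsilon>) * (\<integral>\<^sup>+ w. ennreal (real (card (X w \<inter> B)) ^ (2 * Suc p)) \<partial>M)"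
      by (rule nn_integral_cmult) measurable
    moreover have "(\<integral>\<^sup>+ w. ennreal (c8 / \<epsilon>) * indicator E w \<partial>M) = ennreal (c8 / \<epsilon>) * emeasure M E"
      by (rule nn_integral_cmult_indicator) (rule Em)
    ultimately show ?thesis by simp
  qed
  also have "\<dots> \<le> ennreal (c8 * \<epsilon>) * ennreal Fm + ennreal (c8 / \<epsilon>) * ennreal \<pi>"
  proof (intro add_mono mult_left_mono)
    show "(\<integral>\<^sup>+ w. ennreal (real (card (X w \<inter> B)) ^ (2 * Suc p)) \<partial>M) \<le> ennreal Fm"
      unfolding Fm_def \<mu>_def by (rule spp_moment[OF spp Bb])
    show "emeasure M E \<le> ennreal \<pi>" unfolding E_def \<pi>_def K'_def D_def by (rule Es_prob[OF spp])
  qed auto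
  also have "\<dots> = ennreal (c8 * \<epsilon> * Fm + c8 / \<epsilon> * \<pi>)"
  proof -
    have Fm0: "Fm \<ge> 0" unfolding Fm_def \<mu>eq D_def using spp_lam[OF spp] by simp
    have \<pi>0: "\<pi> \<ge> 0" unfolding \<pi>_def K'_def D_def by simp
    have "ennreal (c8 * \<epsilon>) * ennreal Fm = ennreal (c8 * \<epsilon> * Fm)"
      using c80 \<epsilon>0 by (intro ennreal_mult'[symmetric]) auto
    moreover have "ennreal (c8 / \<epsilon>) * ennreal \<pi> = ennreal (c8 / \<epsilon> * \<pi>)"
      using c80 \<epsilon>0 by (intro ennreal_mult'[symmetric]) auto
    moreover have "ennreal (c8 * \<epsilon> * Fm) + ennreal (c8 / \<epsilon> * \<pi>) = ennreal (c8 * \<epsilon> * Fm + c8 / \<epsilon> * \<pi>)"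
      using c80 \<epsilon>0 Fm0 \<pi>0 by (intro ennreal_plus[symmetric]) auto
    ultimately show ?thesis by simp
  qed
  also have "c8 * \<epsilon> * Fm + c8 / \<epsilon> * \<pi> = c8 * \<epsilon> * (Fm + K')"
  proof -
    have "c8 / \<epsilon> * \<pi> = c8 * (\<pi> / \<epsilon>)" by simp
    also have "\<dots> = c8 * (K' * \<epsilon>)" by (simp only: \<pi>\<epsilon>)
    finally show ?thesis by (simp add: distrib_left mult_ac)
  qed
  finally show ?thesis unfolding E_def B_def c8_def \<epsilon>_def Fm_def K'_def \<mu>eq .
qed


lemma expect_hA:
  fixes k :: "'a::euclidean_space"
  assumes spp: "stationary_poisson_process M X lam"
  defines "D \<equiv> real DIM('a)"
  shows "(\<integral>\<^sup>+ w. hA (X w) R p k \<partial>M)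
     \<le> (\<Sum>n. if annk R k n then ennreal ((8 * D * real (Suc n)) ^ DIM('a) * exp (- (lam * real n ^ DIM('a)) / 2)
           * (fact (2 * Suc p) * (lam * (10 * D * real (Suc n)) ^ DIM('a) + 1) ^ (2 * Suc p) * exp 3
              + ((10 * D) ^ DIM('a) + 1))) else 0)"
proof -
  interpret prob_space M using spp by (rule spp_prob)
  define Es where "Es n = {w \<in> space M. GA (X w) k (real (Suc n)) \<and> (n = 0 \<or> \<not> GA (X w) k (real n))}" for n
  have Esm[measurable]: "Es n \<in> sets M" for n unfolding Es_def by (rule Es_sets[OF spp])
  define Nev where "Nev = {w \<in> space M. \<forall>n. \<not> GA (X w) k (real (Suc n))}"
  have Nev_eq: "Nev = space M - (\<Union>n. {w \<in> space M. GA (X w) k (real (Suc n))})" unfolding Nev_def by auto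
  have "Nev \<in> sets M" unfolding Nev_eq using GA_sets(2)[OF spp] by (intro sets.Diff sets.countable_UN) auto
  moreover have "emeasure M Nev = 0" unfolding Nev_def by (rule Nev_null[OF spp])
  ultimately have Nnull: "Nev \<in> null_sets M" by (auto intro: null_setsI)
  have Nm[measurable]: "(\<lambda>w. card (X w \<inter> Bx k (5 * D * real (Suc n)))) \<in> measurable M (count_space UNIV)" for n
    using spp Bx_borel Bx_bounded by (rule spp_meas)
  define f where "f n w = indicator (Es n) w * (if annk R k n then ennreal ((8 * D * real (Suc n)) ^ DIM('a)
                 * real (card (X w \<inter> Bx k (5 * D * real (Suc n)))) ^ Suc p) else 0)" for n w
  have fm[measurable]: "f n \<in> borel_measurable M" for n unfolding f_def by measurable
  have AE: "AE w in M. hA (X w) R p k = (\<Sum>n. f n w)"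
  proof (rule AE_I'[OF Nnull])
    show "{w \<in> space M. hA (X w) R p k \<noteq> (\<Sum>n. f n w)} \<subseteq> Nev"
    proof
      fix w assume w: "w \<in> {w \<in> space M. hA (X w) R p k \<noteq> (\<Sum>n. f n w)}"
      show "w \<in> Nev"
      proof (rule ccontr)
        assume nN: "w \<notin> Nev"
        have wM: "w \<in> space M" using w by simp
        have z: "(if \<forall>n. \<not> GA (X w) k (real (Suc n)) then \<top> else (0::ennreal)) = 0"
          using nN wM unfolding Nev_def by auto
        have "(\<Sum>n. if GA (X w) k (real (Suc n)) \<and> (n = 0 \<or> \<not> GA (X w) k (real n)) \<and> annk R k n
          then ennreal ((8 * real DIM('a) * real (Suc n)) ^ DIM('a)
                 * real (card (X w \<inter> Bx k (5 * real DIM('a) * real (Suc n)))) ^ Suc p) else 0) = (\<Sum>n. f n w)"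
          by (intro suminf_cong) (use wM in \<open>auto simp: f_def Es_def D_def split: split_indicator\<close>)
        then have "hA (X w) R p k = (\<Sum>n. f n w)" unfolding hA_def z by simp
        with w show False by simp
      qed
    qed
  qed
  have "(\<integral>\<^sup>+ w. hA (X w) R p k \<partial>M) = (\<integral>\<^sup>+ w. (\<Sum>n. f n w) \<partial>M)"
    by (rule nn_integral_cong_AE[OF AE])
  also have "\<dots> = (\<Sum>n. \<integral>\<^sup>+ w. f n w \<partial>M)"
    by (rule nn_integral_suminf) (rule fm)
  also have "\<dots> \<le> (\<Sum>n. if annk R k n then ennreal ((8 * D * real (Suc n)) ^ DIM('a) * exp (- (lam * real n ^ DIM('a)) / 2)
           * (fact (2 * Suc p) * (lam * (10 * D * real (Suc n)) ^ DIM('a) + 1) ^ (2 * Suc p) * exp 3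
              + ((10 * D) ^ DIM('a) + 1))) else 0)"
  proof (intro suminf_le summableI)
    fix n
    show "(\<integral>\<^sup>+ w. f n w \<partial>M) \<le> (if annk R k n then ennreal ((8 * D * real (Suc n)) ^ DIM('a) * exp (- (lam * real n ^ DIM('a)) / 2)
           * (fact (2 * Suc p) * (lam * (10 * D * real (Suc n)) ^ DIM('a) + 1) ^ (2 * Suc p) * exp 3
              + ((10 * D) ^ DIM('a) + 1))) else 0)"
    proof (cases "annk R k n")
      case True
      then show ?thesis unfolding f_def Es_def D_def using expect_term[OF spp, of k n p] by simp
    next
      case False
      then show ?thesis unfolding f_def by simp
    qed
  qed
  finally show ?thesis .
qed


lemma hA_meas:
  fixes k :: "'a::euclidean_space"
  assumes spp: "stationary_poisson_process M X lam"
  shows "(\<lambda>w. hA (X w) R p k) \<in> borel_measurable M"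
proof -
  define D where "D = real DIM('a)"
  define Es where "Es n = {w \<in> space M. GA (X w) k (real (Suc n)) \<and> (n = 0 \<or> \<not> GA (X w) k (real n))}" for n
  have Esm[measurable]: "Es n \<in> sets M" for n unfolding Es_def by (rule Es_sets[OF spp])
  define Nev where "Nev = {w \<in> space M. \<forall>n. \<not> GA (X w) k (real (Suc n))}"
  have Nev_eq: "Nev = space M - (\<Union>n. {w \<in> space M. GA (X w) k (real (Suc n))})" unfolding Nev_def by auto
  have Nevm[measurable]: "Nev \<in> sets M" unfolding Nev_eq using GA_sets(2)[OF spp] by (intro sets.Diff sets.countable_UN) auto
  have Nm[measurable]: "(\<lambda>w. card (X w \<inter> Bx k (5 * D * real (Suc n)))) \<in> measurable M (count_space UNIV)" for n
    using spp Bx_borel Bx_bounded by (rule spp_meas)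
  define f where "f n w = indicator (Es n) w * (if annk R k n then ennreal ((8 * D * real (Suc n)) ^ DIM('a)
                 * real (card (X w \<inter> Bx k (5 * D * real (Suc n)))) ^ Suc p) else 0)" for n w
  have fm[measurable]: "f n \<in> borel_measurable M" for n unfolding f_def by measurable
  have eq: "hA (X w) R p k = (\<Sum>n. f n w) + \<top> * indicator Nev w" if wM: "w \<in> space M" for w
  proof -
    have z: "(if \<forall>n. \<not> GA (X w) k (real (Suc n)) then \<top> else (0::ennreal)) = \<top> * indicator Nev w"
      using wM unfolding Nev_def by (auto split: split_indicator)
    have "(\<Sum>n. if GA (X w) k (real (Suc n)) \<and> (n = 0 \<or> \<not> GA (X w) k (real n)) \<and> annk R k n
      then ennreal ((8 * real DIM('a) * real (Suc n)) ^ DIM('a)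
             * real (card (X w \<inter> Bx k (5 * real DIM('a) * real (Suc n)))) ^ Suc p) else 0) = (\<Sum>n. f n w)"
      by (intro suminf_cong) (use wM in \<open>auto simp: f_def Es_def D_def split: split_indicator\<close>)
    then show ?thesis unfolding hA_def z by simp
  qed
  have "(\<lambda>w. (\<Sum>n. f n w) + \<top> * indicator Nev w) \<in> borel_measurable M" by measurable
  then show ?thesis using eq by (subst measurable_cong) auto
qed


lemma PB_abs: "PB f \<Longrightarrow> PB (\<lambda>n. \<bar>f n\<bar>)"
  unfolding PB_def by simp

lemma summable_PB_exp_pow:
  assumes P: "PB P" and lam: "lam > 0" and d: "d > 0"
  shows "summable (\<lambda>n. P n * exp (- (lam * real n ^ d) / 2))"
proof (rule summable_comparison_test')
  show "summable (\<lambda>n. \<bar>P n\<bar> * exp (- (lam / 2) * real n))"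
    using lam by (intro summable_PB_exp PB_abs P) simp
  fix n :: nat
  have "real n \<le> real n ^ d"
  proof (cases "n = 0")
    case True then show ?thesis using d by simp
  next
    case False then show ?thesis using d by (intro self_le_power) auto
  qed
  then have "- (lam * real n ^ d) / 2 \<le> - (lam / 2) * real n" using lam by (simp add: field_simps)
  then have "exp (- (lam * real n ^ d) / 2) \<le> exp (- (lam / 2) * real n)" by simp
  then show "norm (P n * exp (- (lam * real n ^ d) / 2)) \<le> \<bar>P n\<bar> * exp (- (lam / 2) * real n)"
    by (simp add: abs_mult mult_left_mono)
qed

lemma E_bound:
  fixes X :: "'w \<Rightarrow> 'a::euclidean_space set" and p :: nat and R lam :: real
  assumes spp: "stationary_poisson_process M X lam" and R: "R \<ge> 0"
  defines "D \<equiv> real DIM('a)"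
  defines "P \<equiv> \<lambda>n. (8 * D * real (Suc n)) ^ DIM('a)
           * (fact (2 * Suc p) * (lam * (10 * D * real (Suc n)) ^ DIM('a) + 1) ^ (2 * Suc p) * exp 3
              + ((10 * D) ^ DIM('a) + 1))
           * (unit_ball_vol D * D * (2 * (5 * D * real (Suc n) + D)) * (1 + (5 * D * real (Suc n) + D)) ^ (DIM('a) - 1))"
  shows "summable (\<lambda>n. P n * exp (- (lam * real n ^ DIM('a)) / 2))"
    and "(\<integral>\<^sup>+ w. boundary_ptile_measure (X w) p (ball 0 R) \<partial>M)
      \<le> ennreal ((R + 1) ^ (DIM('a) - 1) * (\<Sum>n. P n * exp (- (lam * real n ^ DIM('a)) / 2)))"
proof -
  have lam: "lam > 0" by (rule spp_lam[OF spp])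
  have PB: "PB P" unfolding P_def by (intro PB_mult PB_add PB_pow PB_const PB_id)
  show sm: "summable (\<lambda>n. P n * exp (- (lam * real n ^ DIM('a)) / 2))"
    using PB lam DIM_positive[where 'a='a] by (rule summable_PB_exp_pow)
  define u where "u n = P n * exp (- (lam * real n ^ DIM('a)) / 2)" for n
  define CC where "CC n = (8 * D * real (Suc n)) ^ DIM('a) * exp (- (lam * real n ^ DIM('a)) / 2)
           * (fact (2 * Suc p) * (lam * (10 * D * real (Suc n)) ^ DIM('a) + 1) ^ (2 * Suc p) * exp 3
              + ((10 * D) ^ DIM('a) + 1))" for n
  define W where "W n = unit_ball_vol D * D * (2 * (5 * D * real (Suc n) + D)) * (1 + (5 * D * real (Suc n) + D)) ^ (DIM('a) - 1)" for n
  have D1: "D \<ge> 1" unfolding D_def by (rule DIM_ge1)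
  have CC0: "CC n \<ge> 0" for n unfolding CC_def using D1 lam by simp
  have W0: "W n \<ge> 0" for n unfolding W_def using D1 by simp
  have uCW: "u n = CC n * W n" for n unfolding u_def P_def CC_def W_def by (simp add: mult_ac)
  define S where "S n = {k \<in> (lattice :: 'a set). annk R k n}" for n
  have Sfin: "finite (S n)" and Scard: "real (card (S n)) \<le> (R + 1) ^ (DIM('a) - 1) * W n" for n
  proof -
    have a0: "5 * D * real (Suc n) \<ge> 0" using D1 by simp
    have eqS: "S n = {k \<in> (lattice :: 'a set). R - 5 * D * real (Suc n) < norm k \<and> norm k < R + 5 * D * real (Suc n)}"
      unfolding S_def annk_def D_def by simp
    have "finite (S n) \<and> real (card (S n)) \<le> unit_ball_vol D * D * (2 * (5 * D * real (Suc n) + D))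
            * ((R + 1) * (1 + (5 * D * real (Suc n) + D))) ^ (DIM('a) - 1)"
      unfolding eqS D_def by (rule annulus_count[OF R]) (use a0 in \<open>simp add: D_def\<close>)
    moreover have "unit_ball_vol D * D * (2 * (5 * D * real (Suc n) + D))
            * ((R + 1) * (1 + (5 * D * real (Suc n) + D))) ^ (DIM('a) - 1) = (R + 1) ^ (DIM('a) - 1) * W n"
      unfolding W_def by (simp add: power_mult_distrib mult_ac)
    ultimately show "finite (S n)" "real (card (S n)) \<le> (R + 1) ^ (DIM('a) - 1) * W n" by auto
  qed
  have "(\<integral>\<^sup>+ w. boundary_ptile_measure (X w) p (ball 0 R) \<partial>M)
      \<le> (\<integral>\<^sup>+ w. \<integral>\<^sup>+ k. hA (X w) R p k \<partial>count_space lattice \<partial>M)"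
    by (intro nn_integral_mono pointwise spp_lf[OF spp])
  also have "\<dots> = (\<integral>\<^sup>+ k. \<integral>\<^sup>+ w. hA (X w) R p k \<partial>M \<partial>count_space lattice)"
    by (rule nn_integral_count_space_nn_integral[OF countable_lattice hA_meas[OF spp]])
  also have "\<dots> \<le> (\<integral>\<^sup>+ k. (\<Sum>n. if annk R k n then ennreal (CC n) else 0) \<partial>count_space (lattice :: 'a set))"
  proof (intro nn_integral_mono)
    fix k :: 'a
    show "(\<integral>\<^sup>+ w. hA (X w) R p k \<partial>M) \<le> (\<Sum>n. if annk R k n then ennreal (CC n) else 0)"
      unfolding CC_def D_def by (rule expect_hA[OF spp])
  qed
  also have "\<dots> = (\<Sum>n. \<integral>\<^sup>+ k. (if annk R k n then ennreal (CC n) else 0) \<partial>count_space (lattice :: 'a set))"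
    by (rule nn_integral_suminf) simp
  also have "\<dots> \<le> (\<Sum>n. ennreal ((R + 1) ^ (DIM('a) - 1) * u n))"
  proof (intro suminf_le summableI)
    fix n
    have "(\<integral>\<^sup>+ k. (if annk R k n then ennreal (CC n) else 0) \<partial>count_space (lattice :: 'a set))
        = (\<Sum>k\<in>S n. (if annk R k n then ennreal (CC n) else 0))"
      by (rule nn_integral_count_space'[OF Sfin]) (auto simp: S_def)
    also have "\<dots> = (\<Sum>k\<in>S n. ennreal (CC n))"
      by (intro sum.cong) (auto simp: S_def)
    also have "\<dots> = ennreal (real (card (S n)) * CC n)"
      using CC0 by (simp add: ennreal_mult' ennreal_of_nat_eq_real_of_nat)
    also have "\<dots> \<le> ennreal ((R + 1) ^ (DIM('a) - 1) * W n * CC n)"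
      using Scard[of n] CC0 by (intro ennreal_leI mult_right_mono) auto
    also have "(R + 1) ^ (DIM('a) - 1) * W n * CC n = (R + 1) ^ (DIM('a) - 1) * u n"
      by (simp add: uCW mult_ac)
    finally show "(\<integral>\<^sup>+ k. (if annk R k n then ennreal (CC n) else 0) \<partial>count_space (lattice :: 'a set))
        \<le> ennreal ((R + 1) ^ (DIM('a) - 1) * u n)" .
  qed
  also have "\<dots> = ennreal (\<Sum>n. (R + 1) ^ (DIM('a) - 1) * u n)"
  proof (rule suminf_ennreal2)
    show "0 \<le> (R + 1) ^ (DIM('a) - 1) * u n" for n using R CC0 W0 by (simp add: uCW)
    show "summable (\<lambda>n. (R + 1) ^ (DIM('a) - 1) * u n)" using sm unfolding u_def by (rule summable_mult)
  qed
  also have "(\<Sum>n. (R + 1) ^ (DIM('a) - 1) * u n) = (R + 1) ^ (DIM('a) - 1) * (\<Sum>n. u n)"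
    using sm unfolding u_def by (rule suminf_mult)
  finally show "(\<integral>\<^sup>+ w. boundary_ptile_measure (X w) p (ball 0 R) \<partial>M)
      \<le> ennreal ((R + 1) ^ (DIM('a) - 1) * (\<Sum>n. P n * exp (- (lam * real n ^ DIM('a)) / 2)))"
    unfolding u_def .
qed


lemma E_bound2:
  fixes X :: "'w \<Rightarrow> 'a::euclidean_space set" and p :: nat and lam :: real
  assumes spp: "stationary_poisson_process M X lam"
  shows "\<exists>S0. S0 \<ge> 0 \<and> (\<forall>R. R \<ge> 0 \<longrightarrow>
     (\<integral>\<^sup>+ w. boundary_ptile_measure (X w) p (ball 0 R) \<partial>M) \<le> ennreal ((R + 1) ^ (DIM('a) - 1) * S0))"
proof -
  obtain S where S: "\<And>R. R \<ge> 0 \<Longrightarrow>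
     (\<integral>\<^sup>+ w. boundary_ptile_measure (X w) p (ball 0 R) \<partial>M) \<le> ennreal ((R + 1) ^ (DIM('a) - 1) * S)"
    using E_bound(2)[OF spp] by blast
  show ?thesis
  proof (intro exI[of _ "max 0 S"] conjI allI impI)
    fix R :: real assume R: "R \<ge> 0"
    have "ennreal ((R + 1) ^ (DIM('a) - 1) * S) \<le> ennreal ((R + 1) ^ (DIM('a) - 1) * max 0 S)"
      using R by (intro ennreal_leI mult_left_mono) auto
    with S[OF R] show "(\<integral>\<^sup>+ w. boundary_ptile_measure (X w) p (ball 0 R) \<partial>M) \<le> ennreal ((R + 1) ^ (DIM('a) - 1) * max 0 S)"
      by (rule order_trans)
  qed simp
qed

theorem lemma4p3:
  fixes M :: "'w measure" and X :: "'w \<Rightarrow> 'a::euclidean_space set" and lam :: real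
    and p :: nat
  assumes "stationary_poisson_process M X lam"
    and "p \<le> DIM('a)"
  shows "(\<forall>\<^sub>F R in at_top. (\<integral>\<^sup>+ w. boundary_ptile_measure (X w) p (ball 0 R) \<partial>M) < \<infinity>)
       \<and> (\<lambda>R. enn2real (\<integral>\<^sup>+ w. boundary_ptile_measure (X w) p (ball 0 R) \<partial>M))
           \<in> o(\<lambda>R. R ^ DIM('a))"
proof -
  define E where "E R = (\<integral>\<^sup>+ w. boundary_ptile_measure (X w) p (ball 0 R) \<partial>M)" for R
  define d where "d = DIM('a)"
  have d1: "d = Suc (d - 1)" unfolding d_def using DIM_positive[where 'a='a] by simp
  obtain S0 where S0: "S0 \<ge> 0" and ES: "\<And>R. R \<ge> 0 \<Longrightarrow> E R \<le> ennreal ((R + 1) ^ (d - 1) * S0)"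
    using E_bound2[OF assms(1), of p] unfolding E_def d_def by blast
  have c1: "\<forall>\<^sub>F R in at_top. E R < \<infinity>"
    using eventually_ge_at_top[of "0::real"]
  proof (rule eventually_mono)
    fix R :: real assume "R \<ge> 0"
    from ES[OF this] show "E R < \<infinity>" by (simp add: le_less_trans top.not_eq_extremum)
  qed
  have c2: "(\<lambda>R. enn2real (E R)) \<in> o(\<lambda>R. R ^ d)"
  proof (rule landau_o.smallI)
    fix c :: real assume c: "c > 0"
    define R0 where "R0 = max 1 (2 ^ (d - 1) * S0 / c)"
    show "\<forall>\<^sub>F R in at_top. norm (enn2real (E R)) \<le> c * norm (R ^ d)"
      using eventually_ge_at_top[of R0]
    proof (rule eventually_mono)
      fix R :: real assume R: "R \<ge> R0"
      have R1: "R \<ge> 1" using R unfolding R0_def by simp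
      have RS: "2 ^ (d - 1) * S0 \<le> c * R"
      proof -
        have "2 ^ (d - 1) * S0 / c \<le> R" using R unfolding R0_def by simp
        then show ?thesis using c by (simp add: divide_le_eq mult.commute)
      qed
      have e0: "enn2real (E R) \<ge> 0" by simp
      have e1: "enn2real (E R) \<le> (R + 1) ^ (d - 1) * S0"
        using ES[of R] R1 S0 by (intro enn2real_leI) auto
      also have "\<dots> \<le> (2 * R) ^ (d - 1) * S0"
        using R1 S0 by (intro mult_right_mono power_mono) auto
      also have "\<dots> = R ^ (d - 1) * (2 ^ (d - 1) * S0)" by (simp add: power_mult_distrib mult_ac)
      also have "\<dots> \<le> R ^ (d - 1) * (c * R)" using RS R1 by (intro mult_left_mono) auto
      also have "\<dots> = c * R ^ d" using d1 by (metis mult.assoc mult.commute power_Suc)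
      finally show "norm (enn2real (E R)) \<le> c * norm (R ^ d)" using e0 R1 by simp
    qed
  qed
  show ?thesis using c1 c2 unfolding E_def d_def by simp
qed

end
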